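(* (1) Let $k\geq 2$ and let $(\mathscr{G}_k^{(m)})_{m\geq k}$ be a family of CNOT circuits such that each $\mathscr{G}_k^{(m)}$ is a clean special $k$-body generator on $m$ qubits. Then for $n\geq k$ the circuit $$\mathcal{G}_k^{(n)}:=\mathscr{G}_k^{(n)}\odot\mathscr{G}_k^{(2,n)}\odot\cdots\odot\mathscr{G}_k^{(n-k+1,n)}$$ is a $k$-body generator. (2) Let $k_0\geq 2$ and let $(\mathscr{G}_{k_0}^{(n)})_{n\geq k_0}$ be a family of clean special $k_0$-body generators. For $k>k_0$ and $n\geq k$ define recursively $\mathscr{G}_k^{(n)}:=W_k^{(n)}\odot \mathrm{CX}_{n-k+1,n-k+2}\odot\overline{\mathrm{PTC}}^{(1,n-k+1)}$, where $W_k^{(k)}:=\mathrm{CX}_{1,2}\odot\mathscr{G}_{k-1}^{(2,k)}$ and, for $n>k$, $W_k^{(n)}:=\mathrm{CX}_{1,2}\odot\mathscr{G}_{k-1}^{(2,n)}\odot\mathrm{SW}_{1,2}\odot W_k^{(2,n)}$; and define $\mathcal{G}_k^{(n)}$ from $\mathscr{G}_k$ as in (1). Then for every $k>k_0$, $\mathscr{G}_k^{(n)}$ is a clean special $k$-body generator and $\mathcal{G}_k^{(n)}$ is a $k$-body generator. Moreover, if $\operatorname{size}(\mathscr{G}_{k_0}^{(n)})=c_1n^{k_0-1}+\mathcal{O}(n^{k_0-2})$ and $D(\mathscr{G}_{k_0}^{(n)})=c_2n^{k_0-2}+\mathcal{O}(n^{k_0-3})$ for constants $c_1,c_2>0$,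 then $$\operatorname{size}(\mathcal{G}_k^{(n)})=c_1\frac{(k_0-1)!}{k!}n^{k}+\mathcal{O}(n^{k-1}),\qquad D(\mathcal{G}_k^{(n)})=c_2\frac{(k_0-2)!}{(k-1)!}n^{k-1}+\mathcal{O}(n^{k-2}).$$
   Context: Qubits are indexed $1,\ldots,n$; $\mathrm{CX}_{i,j}$ ($i\neq j$) is the CNOT gate with control $i$, target $j$. A CNOT circuit is a finite sequence of moments, each a set of CNOT gates on pairwise disjoint qubits; $D(C)$ is the number of moments and $\operatorname{size}(C)$ the number of gates. A single gate also denotes the one-moment circuit containing it. $C_1\odot C_2$ is the circuit consisting of the moments of $C_1$ followed by those of $C_2$. If $C^{(m)}$ is a circuit on qubits $1,\ldots,m$, then for $q-p+1=m$, $C^{(p,q)}$ is obtained by replacing every gate $\mathrm{CX}_{i,j}$ by $\mathrm{CX}_{i+p-1,j+p-1}$; $\overline{C}^{(p,q)}$ is obtained from $C^{(p,q)}$ (same moments) by replacing every gate $\mathrm{CX}_{i,j}$ by $\mathrm{CX}_{p+q-i,p+q-j}$. $\mathrm{DX}_{c,t}:=\mathrm{CX}_{t,c}\odot\mathrm{CX}_{c,t}$, $\mathrm{SW}_{c,t}:=\mathrm{CX}_{c,t}\odot\mathrm{CX}_{t,c}\odot\mathrm{CX}_{c,t}$, and $\mathrm{PTC}^{(m)}:=\mathrm{DX}_{1,2}\odot\cdots\odot\mathrm{DX}_{m-1,m}$ ($\mathrm{PTC}^{(1)}$ empty). A label is a subset of $\{1,\ldots,n\}$; $ab$ is the symmetric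 difference of labels. A label sequence $\ell=(\ell_1,\ldots,\ell_n)$ is acted on from the right: $\ell\,\mathrm{CX}_{i,j}$ replaces $\ell_j$ by $\ell_i\ell_j$; a moment applies its gates, a circuit its moments in order. With $C_{1,m}$ the first $m$ moments, $C$ generates a label $\lambda$ from $\ell$ if $\lambda$ is an entry of $\ell C_{1,m}$ for some $m\in\{1,\ldots,D(C)\}$. Let $\ell^0=(\{1\},\ldots,\{n\})$. A CNOT circuit on $n\geq k$ qubits is a $k$-body generator if it generates from $\ell^0$ every $k$-element subset of $\{1,\ldots,n\}$. It is a clean special $k$-body generator if (i) it generates from $\ell^0$ every label $\{1,i_1,\ldots,i_{k-1}\}$ with $1<i_1<\cdots<i_{k-1}\leq n$, and (ii) there is a permutation $\pi$ of $\{1,\ldots,n\}$ with $\pi(1)=1$ such that $\ell^0C=(\{\pi(1)\},\ldots,\{\pi(n)\})$. *)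

theory Defs
  imports Main "HOL-Library.Landau_Symbols"
begin

text \<open>A gate CX_{i,j} is the pair (i,j); a moment is a set of gates; a circuit is a list of moments.\<close>
type_synonym gate = "nat \<times> nat"
type_synonym moment = "gate set"
type_synonym circuit = "moment list"

definition is_circuit :: "nat \<Rightarrow> circuit \<Rightarrow> bool" where
  "is_circuit n C \<longleftrightarrow> (\<forall>M \<in> set C.
      (\<forall>(i,j) \<in> M. i \<noteq> j \<and> i \<in> {1..n} \<and> j \<in> {1..n}) \<and>
      (\<forall>g \<in> M. \<forall>g' \<in> M. g \<noteq> g' \<longrightarrow> {fst g, snd g} \<inter> {fst g', snd g'} = {}))"

definition depth :: "circuit \<Rightarrow> nat" where "depth C = length C"
definition csize :: "circuit \<Rightarrow> nat" where "csize C = (\<Sum>M \<leftarrow> C. card M)"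

definition CX :: "nat \<Rightarrow> nat \<Rightarrow> circuit" where "CX i j = [{(i,j)}]"
definition DX :: "nat \<Rightarrow> nat \<Rightarrow> circuit" where "DX c t = CX t c @ CX c t"
definition SW :: "nat \<Rightarrow> nat \<Rightarrow> circuit" where "SW c t = CX c t @ CX t c @ CX c t"
definition PTC :: "nat \<Rightarrow> circuit" where "PTC m = concat (map (\<lambda>i. DX i (i+1)) [1..<m])"

definition map_gates :: "(nat \<Rightarrow> nat) \<Rightarrow> circuit \<Rightarrow> circuit" where
  "map_gates f C = map (\<lambda>M. (\<lambda>(i,j). (f i, f j)) ` M) C"

text \<open>C^{(p,q)} (shift by p-1) and its reflection overline{C}^{(p,q)}.\<close>
definition shift :: "nat \<Rightarrow> circuit \<Rightarrow> circuit" where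
  "shift p C = map_gates (\<lambda>i. i + p - 1) C"
definition refl :: "nat \<Rightarrow> nat \<Rightarrow> circuit \<Rightarrow> circuit" where
  "refl p q C = map_gates (\<lambda>i. p + q - i) (shift p C)"

text \<open>Labels: sets of qubits; product = symmetric difference. Label sequences: nat \<Rightarrow> nat set (entries 1..n).\<close>
definition labmul :: "nat set \<Rightarrow> nat set \<Rightarrow> nat set" where
  "labmul a b = (a - b) \<union> (b - a)"

definition apply_moment :: "moment \<Rightarrow> (nat \<Rightarrow> nat set) \<Rightarrow> (nat \<Rightarrow> nat set)" where
  "apply_moment M l = (\<lambda>q. if \<exists>i. (i,q) \<in> M then labmul (l (THE i. (i,q) \<in> M)) (l q) else l q)"

definition apply_circ :: "circuit \<Rightarrow> (nat \<Rightarrow> nat set) \<Rightarrow> (nat \<Rightarrow> nat set)" where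
  "apply_circ C l = fold apply_moment C l"

definition l0 :: "nat \<Rightarrow> nat set" where "l0 q = {q}"

definition generated :: "nat \<Rightarrow> circuit \<Rightarrow> (nat \<Rightarrow> nat set) \<Rightarrow> nat set set" where
  "generated n C l = {apply_circ (take m C) l q | m q. 1 \<le> m \<and> m \<le> length C \<and> q \<in> {1..n}}"

definition k_body_gen :: "nat \<Rightarrow> nat \<Rightarrow> circuit \<Rightarrow> bool" where
  "k_body_gen k n C \<longleftrightarrow> is_circuit n C \<and> n \<ge> k \<and>
     (\<forall>S. S \<subseteq> {1..n} \<and> card S = k \<longrightarrow> S \<in> generated n C l0)"

definition clean_special :: "nat \<Rightarrow> nat \<Rightarrow> circuit \<Rightarrow> bool" where
  "clean_special k n C \<longleftrightarrow> is_circuit n C \<and> n \<ge> k \<and>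
     (\<forall>S. S \<subseteq> {2..n} \<and> card S = k - 1 \<longrightarrow> insert 1 S \<in> generated n C l0) \<and>
     (\<exists>\<pi>. bij_betw \<pi> {1..n} {1..n} \<and> \<pi> 1 = 1 \<and> (\<forall>q \<in> {1..n}. apply_circ C l0 q = {\<pi> q}))"

text \<open>Construction (1): G^{(n)} \<odot> G^{(2,n)} \<odot> ... \<odot> G^{(n-k+1,n)}, where G^{(p,n)} is G^{(n-p+1)} shifted.\<close>
definition full_gen :: "(nat \<Rightarrow> circuit) \<Rightarrow> nat \<Rightarrow> nat \<Rightarrow> circuit" where
  "full_gen G k n = concat (map (\<lambda>p. shift p (G (n - p + 1))) [1..<n - k + 2])"

text \<open>W_k^{(k+d)} given the level-(k-1) family F.\<close>
primrec Wc :: "(nat \<Rightarrow> circuit) \<Rightarrow> nat \<Rightarrow> nat \<Rightarrow> circuit" where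
  "Wc F k 0 = CX 1 2 @ shift 2 (F (k - 1))"
| "Wc F k (Suc d) = CX 1 2 @ shift 2 (F (k + Suc d - 1)) @ SW 1 2 @ shift 2 (Wc F k d)"

definition W :: "(nat \<Rightarrow> circuit) \<Rightarrow> nat \<Rightarrow> nat \<Rightarrow> circuit" where
  "W F k n = Wc F k (n - k)"

text \<open>special_gen G0 k0 d n = scr G_{k0+d}^{(n)}.\<close>
primrec special_gen :: "(nat \<Rightarrow> circuit) \<Rightarrow> nat \<Rightarrow> nat \<Rightarrow> nat \<Rightarrow> circuit" where
  "special_gen G0 k0 0 = G0"
| "special_gen G0 k0 (Suc d) = (\<lambda>n. let k = k0 + Suc d in
      W (special_gen G0 k0 d) k n @ CX (n - k + 1) (n - k + 2) @ refl 1 (n - k + 1) (PTC (n - k + 1)))"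

end

theory Submission
  imports Defs
begin


lemma labmul_simps:
  "labmul a (labmul a b) = b" "labmul (labmul a b) b = a" "labmul (labmul a b) a = b"
  "labmul b (labmul a b) = a" "labmul a b = labmul b a" "labmul {} a = a" "labmul a {} = a"
  unfolding labmul_def by auto

lemma apply_circ_Nil[simp]: "apply_circ [] l = l" by (simp add: apply_circ_def)
lemma apply_circ_Cons[simp]: "apply_circ (M # C) l = apply_circ C (apply_moment M l)"
  by (simp add: apply_circ_def)
lemma apply_circ_append[simp]: "apply_circ (A @ B) l = apply_circ B (apply_circ A l)"
  by (simp add: apply_circ_def)

lemma apply_moment_single: "apply_moment {(i,j)} l = l(j := labmul (l i) (l j))"
  unfolding apply_moment_def by (rule ext) simp

lemma apply_CX[simp]: "apply_circ (CX i j) l = l(j := labmul (l i) (l j))"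
  by (simp add: CX_def apply_moment_single)

lemma generated_append1: "generated n A l \<subseteq> generated n (A @ B) l"
  unfolding generated_def by force

lemma generated_append2: "generated n B (apply_circ A l) \<subseteq> generated n (A @ B) l"
proof
  fix X assume "X \<in> generated n B (apply_circ A l)"
  then obtain m q where X: "X = apply_circ (take m B) (apply_circ A l) q" "1 \<le> m" "m \<le> length B" "q \<in> {1..n}"
    unfolding generated_def by blast
  have "take (length A + m) (A @ B) = A @ take m B" by simp
  hence "X = apply_circ (take (length A + m) (A @ B)) l q" using X by simp
  thus "X \<in> generated n (A @ B) l" using X unfolding generated_def
    by (intro CollectI exI[of _ "length A + m"] exI[of _ q]) auto
qed

lemma generated_subset_mono: "X \<in> generated n A l \<Longrightarrow> X \<in> generated n (A @ B) l"
  using generated_append1 by blast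
lemma generated_subset_mono2: "X \<in> generated n B (apply_circ A l) \<Longrightarrow> X \<in> generated n (A @ B) l"
  using generated_append2 by blast

section \<open>Linearity\<close>

definition lsum :: "(nat \<Rightarrow> nat set) \<Rightarrow> nat set \<Rightarrow> nat set" where
  "lsum l A = {x. odd (card {i\<in>A. x \<in> l i})}"

lemma lsum_labmul:
  assumes "finite A" "finite B"
  shows "labmul (lsum l A) (lsum l B) = lsum l (labmul A B)"
proof -
  have *: "odd (card {i\<in>labmul A B. x \<in> l i}) \<longleftrightarrow> (odd (card {i\<in>A. x \<in> l i}) \<noteq> odd (card {i\<in>B. x \<in> l i}))" for x
  proof -
    let ?P = "{i. x \<in> l i}"
    have fa: "finite (A \<inter> ?P)" "finite (B \<inter> ?P)" using assms by auto
    have e1: "{i\<in>A. x \<in> l i} = A \<inter> ?P" "{i\<in>B. x \<in> l i} = B \<inter> ?P" by auto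
    have e2: "{i\<in>labmul A B. x \<in> l i} = ((A \<inter> ?P) \<union> (B \<inter> ?P)) - ((A \<inter> ?P) \<inter> (B \<inter> ?P))"
      unfolding labmul_def by auto
    have c1: "card ((A \<inter> ?P) \<union> (B \<inter> ?P)) + card ((A \<inter> ?P) \<inter> (B \<inter> ?P)) = card (A \<inter> ?P) + card (B \<inter> ?P)"
      using card_Un_Int[OF fa] by simp
    have c2: "card (((A \<inter> ?P) \<union> (B \<inter> ?P)) - ((A \<inter> ?P) \<inter> (B \<inter> ?P))) = card ((A \<inter> ?P) \<union> (B \<inter> ?P)) - card ((A \<inter> ?P) \<inter> (B \<inter> ?P))"
      using fa by (intro card_Diff_subset) auto
    have c3: "card ((A \<inter> ?P) \<inter> (B \<inter> ?P)) \<le> card ((A \<inter> ?P) \<union> (B \<inter> ?P))"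
      using fa by (intro card_mono) auto
    have arith: "\<And>a b u i::nat. u + i = a + b \<Longrightarrow> i \<le> u \<Longrightarrow> odd (u - i) \<longleftrightarrow> (odd a \<noteq> odd b)"
    proof -
      fix a b u i :: nat assume h: "u + i = a + b" "i \<le> u"
      hence "a + b = (u - i) + 2 * i" by linarith
      hence "odd (a + b) \<longleftrightarrow> odd (u - i)" by simp
      thus "odd (u - i) \<longleftrightarrow> (odd a \<noteq> odd b)" by simp
    qed
    show ?thesis unfolding e1 e2 c2 by (rule arith[OF c1 c3])
  qed
  show ?thesis
  proof (rule set_eqI)
    fix x
    show "x \<in> labmul (lsum l A) (lsum l B) \<longleftrightarrow> x \<in> lsum l (labmul A B)"
      unfolding lsum_def mem_Collect_eq * unfolding labmul_def by blast
  qed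
qed

lemma lsum_single[simp]: "lsum l {q} = l q"
proof -
  have "{i\<in>{q}. x \<in> l i} = (if x \<in> l q then {q} else {})" for x
    by auto
  hence "card {i\<in>{q}. x \<in> l i} = (if x \<in> l q then 1 else 0)" for x
    by simp
  thus ?thesis unfolding lsum_def by auto
qed

lemma finite_labmul: "finite a \<Longrightarrow> finite b \<Longrightarrow> finite (labmul a b)"
  unfolding labmul_def by auto

lemma apply_moment_lsum:
  assumes "\<forall>q. finite (L q)"
  shows "apply_moment M (\<lambda>q. lsum l (L q)) = (\<lambda>q. lsum l (apply_moment M L q))"
  using assms unfolding apply_moment_def by (simp add: lsum_labmul fun_eq_iff)

lemma apply_moment_finite:
  assumes "\<forall>q. finite (L q)" shows "\<forall>q. finite (apply_moment M L q)"
  using assms by (auto simp: apply_moment_def finite_labmul)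

lemma apply_circ_lsum:
  assumes "\<forall>q. finite (L q)"
  shows "apply_circ C (\<lambda>q. lsum l (L q)) = (\<lambda>q. lsum l (apply_circ C L q))"
  using assms
proof (induction C arbitrary: L)
  case Nil thus ?case by simp
next
  case (Cons M C)
  show ?case using Cons.IH[OF apply_moment_finite[OF Cons.prems]] Cons.prems
    by (simp add: apply_moment_lsum)
qed

lemma apply_circ_finite: "\<forall>q. finite (L q) \<Longrightarrow> finite (apply_circ C L q)"
proof (induction C arbitrary: L)
  case Nil thus ?case by simp
next
  case (Cons M C) thus ?case using apply_moment_finite[OF Cons.prems] by simp
qed

lemma apply_circ_lin: "apply_circ C l q = lsum l (apply_circ C l0 q)"
proof -
  have "apply_circ C l = apply_circ C (\<lambda>q. lsum l (l0 q))" by (simp add: l0_def)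
  also have "\<dots> = (\<lambda>q. lsum l (apply_circ C l0 q))"
    by (rule apply_circ_lsum) (simp add: l0_def)
  finally show ?thesis by simp
qed

lemma finite_l0_circ[simp]: "finite (apply_circ C l0 q)"
  by (rule apply_circ_finite) (simp add: l0_def)

lemma generated_lin: "X \<in> generated n C l0 \<Longrightarrow> lsum l X \<in> generated n C l"
proof -
  assume "X \<in> generated n C l0"
  then obtain m q where X: "X = apply_circ (take m C) l0 q" "1 \<le> m" "m \<le> length C" "q \<in> {1..n}"
    unfolding generated_def by blast
  hence "lsum l X = apply_circ (take m C) l q" using apply_circ_lin[of "take m C" l q] by simp
  thus ?thesis using X unfolding generated_def by blast
qed

lemma lsum_insert: "finite A \<Longrightarrow> a \<notin> A \<Longrightarrow> lsum l (insert a A) = labmul (l a) (lsum l A)"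
proof -
  assume "finite A" "a \<notin> A"
  hence "labmul {a} A = insert a A" unfolding labmul_def by auto
  thus ?thesis using lsum_labmul[of "{a}" A l] \<open>finite A\<close> by simp
qed

lemma lsum_inj:
  assumes "finite A" "inj_on \<tau> A" "\<forall>i\<in>A. l i = {\<tau> i}"
  shows "lsum l A = \<tau> ` A"
  using assms
proof (induction A rule: finite_induct)
  case empty thus ?case by (simp add: lsum_def)
next
  case (insert a A)
  have "\<tau> a \<notin> \<tau> ` A" using insert by auto
  have "lsum l (insert a A) = labmul {\<tau> a} (\<tau> ` A)" using insert by (simp add: lsum_insert)
  also have "\<dots> = \<tau> ` insert a A" using \<open>\<tau> a \<notin> \<tau> ` A\<close> unfolding labmul_def by auto
  finally show ?case .
qed




section \<open>Circuits and relabelling\<close>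

definition gm :: "(nat \<Rightarrow> nat) \<Rightarrow> moment \<Rightarrow> moment" where
  "gm f M = (\<lambda>(i,j). (f i, f j)) ` M"

lemma map_gates_Cons[simp]: "map_gates f (M # C) = gm f M # map_gates f C"
  by (simp add: map_gates_def gm_def)
lemma map_gates_Nil[simp]: "map_gates f [] = []" by (simp add: map_gates_def)
lemma map_gates_append[simp]: "map_gates f (A @ B) = map_gates f A @ map_gates f B"
  by (simp add: map_gates_def)
lemma map_gates_take: "take m (map_gates f C) = map_gates f (take m C)"
  by (simp add: map_gates_def take_map)
lemma length_map_gates[simp]: "length (map_gates f C) = length C"
  by (simp add: map_gates_def)

definition umoment :: "moment \<Rightarrow> bool" where
  "umoment M \<longleftrightarrow> (\<forall>i i' q. (i,q) \<in> M \<longrightarrow> (i',q) \<in> M \<longrightarrow> i = i')"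

definition gate_ok :: "nat \<Rightarrow> moment \<Rightarrow> bool" where
  "gate_ok n M \<longleftrightarrow> (\<forall>i j. (i,j) \<in> M \<longrightarrow> i \<noteq> j \<and> 1 \<le> i \<and> i \<le> n \<and> 1 \<le> j \<and> j \<le> n)"
definition disj_ok :: "moment \<Rightarrow> bool" where
  "disj_ok M \<longleftrightarrow> (\<forall>a b c d. (a,b) \<in> M \<longrightarrow> (c,d) \<in> M \<longrightarrow> (a,b) \<noteq> (c,d) \<longrightarrow> a \<noteq> c \<and> a \<noteq> d \<and> b \<noteq> c \<and> b \<noteq> d)"

lemma gate_ok_iff: "(\<forall>(i, j)\<in>M. i \<noteq> j \<and> i \<in> {1..n} \<and> j \<in> {1..n}) \<longleftrightarrow> gate_ok n M"
  unfolding gate_ok_def by auto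

lemma disj_ok_iff: "(\<forall>g\<in>M. \<forall>g'\<in>M. g \<noteq> g' \<longrightarrow> {fst g, snd g} \<inter> {fst g', snd g'} = {}) \<longleftrightarrow> disj_ok M"
proof -
  have e: "{fst g, snd g} \<inter> {fst g', snd g'} = {} \<longleftrightarrow> fst g \<noteq> fst g' \<and> fst g \<noteq> snd g' \<and> snd g \<noteq> fst g' \<and> snd g \<noteq> snd g'" for g g' :: gate
    by auto
  show ?thesis unfolding e disj_ok_def
  proof (intro iffI allI impI)
    fix a b c d assume H: "\<forall>g\<in>M. \<forall>g'\<in>M. g \<noteq> g' \<longrightarrow> fst g \<noteq> fst g' \<and> fst g \<noteq> snd g' \<and> snd g \<noteq> fst g' \<and> snd g \<noteq> snd g'"
      and h: "(a,b) \<in> M" "(c,d) \<in> M" "(a,b) \<noteq> (c,d)"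
    have "fst (a,b) \<noteq> fst (c,d) \<and> fst (a,b) \<noteq> snd (c,d) \<and> snd (a,b) \<noteq> fst (c,d) \<and> snd (a,b) \<noteq> snd (c,d)"
      using H h by blast
    thus "a \<noteq> c \<and> a \<noteq> d \<and> b \<noteq> c \<and> b \<noteq> d" by simp
  next
    assume H: "\<forall>a b c d. (a, b) \<in> M \<longrightarrow> (c, d) \<in> M \<longrightarrow> (a, b) \<noteq> (c, d) \<longrightarrow> a \<noteq> c \<and> a \<noteq> d \<and> b \<noteq> c \<and> b \<noteq> d"
    show "\<forall>g\<in>M. \<forall>g'\<in>M. g \<noteq> g' \<longrightarrow> fst g \<noteq> fst g' \<and> fst g \<noteq> snd g' \<and> snd g \<noteq> fst g' \<and> snd g \<noteq> snd g'"
    proof (intro ballI impI)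
      fix g g' assume "g \<in> M" "g' \<in> M" "g \<noteq> g'"
      thus "fst g \<noteq> fst g' \<and> fst g \<noteq> snd g' \<and> snd g \<noteq> fst g' \<and> snd g \<noteq> snd g'"
        using H[rule_format, of "fst g" "snd g" "fst g'" "snd g'"] by simp
    qed
  qed
qed

lemma is_circuit_alt: "is_circuit n C \<longleftrightarrow> (\<forall>M\<in>set C. gate_ok n M \<and> disj_ok M)"
  unfolding is_circuit_def gate_ok_iff disj_ok_iff ..

lemma is_circuit_umoment: "is_circuit n C \<Longrightarrow> M \<in> set C \<Longrightarrow> umoment M"
proof -
  assume "is_circuit n C" "M \<in> set C"
  hence d: "disj_ok M" unfolding is_circuit_alt by blast
  show ?thesis unfolding umoment_def
  proof (intro allI impI)
    fix i i' q assume a: "(i,q) \<in> M" "(i',q) \<in> M"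
    show "i = i'"
    proof (rule ccontr)
      assume "i \<noteq> i'"
      thus False using d a unfolding disj_ok_def by blast
    qed
  qed
qed

lemma is_circuit_range: "is_circuit n C \<Longrightarrow> M \<in> set C \<Longrightarrow> (i,j) \<in> M \<Longrightarrow> i \<in> {1..n} \<and> j \<in> {1..n} \<and> i \<noteq> j"
proof -
  assume a: "is_circuit n C" "M \<in> set C" "(i,j) \<in> M"
  hence "gate_ok n M" unfolding is_circuit_alt by blast
  thus ?thesis using a(3) unfolding gate_ok_def by auto
qed

lemma apply_moment_gm:
  assumes "inj f" "umoment M"
  shows "apply_moment (gm f M) l (f q) = apply_moment M (l \<circ> f) q"
proof (cases "\<exists>i. (i,q) \<in> M")
  case True
  then obtain i0 where i0: "(i0,q) \<in> M" by blast
  have th1: "(THE i. (i,q) \<in> M) = i0" using i0 assms(2) unfolding umoment_def by blast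
  have ex: "\<exists>i. (i, f q) \<in> gm f M" using i0 unfolding gm_def by force
  have th2: "(THE i. (i, f q) \<in> gm f M) = f i0"
  proof (rule the_equality)
    show "(f i0, f q) \<in> gm f M" using i0 unfolding gm_def by force
  next
    fix x assume "(x, f q) \<in> gm f M"
    then obtain a b where ab: "(a,b) \<in> M" "x = f a" "f q = f b" unfolding gm_def by auto
    hence "b = q" using assms(1) by (auto dest: injD)
    hence "a = i0" using ab i0 assms(2) unfolding umoment_def by blast
    thus "x = f i0" using ab by simp
  qed
  show ?thesis unfolding apply_moment_def using True ex th1 th2 by simp
next
  case False
  have "\<not> (\<exists>i. (i, f q) \<in> gm f M)"
  proof
    assume "\<exists>i. (i, f q) \<in> gm f M"
    then obtain a b where ab: "(a,b) \<in> M" "f q = f b" unfolding gm_def by auto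
    hence "b = q" using assms(1) by (auto dest: injD)
    thus False using ab False by blast
  qed
  thus ?thesis unfolding apply_moment_def using False by simp
qed

lemma apply_moment_gm_out:
  assumes "\<forall>(i,j)\<in>M. j \<in> Q" "q \<notin> f ` Q"
  shows "apply_moment (gm f M) l q = l q"
proof -
  have "\<not> (\<exists>i. (i, q) \<in> gm f M)"
  proof
    assume "\<exists>i. (i, q) \<in> gm f M"
    then obtain a b where "(a,b) \<in> M" "q = f b" unfolding gm_def by auto
    thus False using assms by blast
  qed
  thus ?thesis unfolding apply_moment_def by simp
qed

lemma apply_circ_map_gates:
  assumes "inj f" "\<forall>M\<in>set C. umoment M"
  shows "apply_circ (map_gates f C) l (f q) = apply_circ C (l \<circ> f) q"
  using assms(2)
proof (induction C arbitrary: l)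
  case Nil thus ?case by simp
next
  case (Cons M C)
  have "apply_moment (gm f M) l \<circ> f = apply_moment M (l \<circ> f)"
    using apply_moment_gm[OF assms(1)] Cons.prems by (auto simp: fun_eq_iff)
  moreover have "apply_circ (map_gates f C) (apply_moment (gm f M) l) (f q) = apply_circ C (apply_moment (gm f M) l \<circ> f) q"
    using Cons.IH Cons.prems by (simp add: comp_def)
  ultimately show ?case by (simp add: comp_def)
qed

lemma apply_circ_map_gates_out:
  assumes "\<forall>M\<in>set C. \<forall>(i,j)\<in>M. j \<in> Q" "q \<notin> f ` Q"
  shows "apply_circ (map_gates f C) l q = l q"
  using assms(1)
proof (induction C arbitrary: l)
  case Nil thus ?case by simp
next
  case (Cons M C)
  thus ?case using apply_moment_gm_out[OF _ assms(2)] by simp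
qed

lemma inj_shift: "p \<ge> 1 \<Longrightarrow> inj (\<lambda>i::nat. i + p - 1)"
  by (auto simp: inj_def)

lemma shift_apply:
  assumes "p \<ge> 1" "is_circuit m C"
  shows "apply_circ (shift p C) l (q + p - 1) = lsum (\<lambda>i. l (i + p - 1)) (apply_circ C l0 q)"
proof -
  have "apply_circ (shift p C) l (q + p - 1) = apply_circ C (l \<circ> (\<lambda>i. i + p - 1)) q"
    unfolding shift_def
    by (rule apply_circ_map_gates[OF inj_shift[OF assms(1)]]) (use is_circuit_umoment[OF assms(2)] in blast)
  also have "\<dots> = lsum (\<lambda>i. l (i + p - 1)) (apply_circ C l0 q)"
    by (subst apply_circ_lin) (simp add: comp_def)
  finally show ?thesis .
qed

lemma shift_apply_out:
  assumes "p \<ge> 1" "is_circuit m C" "q < p \<or> q > m + p - 1"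
  shows "apply_circ (shift p C) l q = l q"
  unfolding shift_def
proof (rule apply_circ_map_gates_out[where Q="{1..m}"])
  show "\<forall>M\<in>set C. \<forall>(i, j)\<in>M. j \<in> {1..m}" using is_circuit_range[OF assms(2)] by blast
  show "q \<notin> (\<lambda>i. i + p - 1) ` {1..m}" using assms(1,3) by auto
qed

lemma shift_generated:
  assumes "p \<ge> 1" "is_circuit m C" "m + p - 1 \<le> N" "X \<in> generated m C l0"
  shows "lsum (\<lambda>i. l (i + p - 1)) X \<in> generated N (shift p C) l"
proof -
  obtain t q where X: "X = apply_circ (take t C) l0 q" "1 \<le> t" "t \<le> length C" "q \<in> {1..m}"
    using assms(4) unfolding generated_def by blast
  have ct: "is_circuit m (take t C)" using assms(2) unfolding is_circuit_alt by (meson in_set_takeD)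
  have "lsum (\<lambda>i. l (i + p - 1)) X = apply_circ (shift p (take t C)) l (q + p - 1)"
    using shift_apply[OF assms(1) ct] X by simp
  also have "shift p (take t C) = take t (shift p C)" by (simp add: shift_def map_gates_take)
  finally have e: "lsum (\<lambda>i. l (i + p - 1)) X = apply_circ (take t (shift p C)) l (q + p - 1)" .
  have "1 \<le> t" "t \<le> length (shift p C)" "q + p - 1 \<in> {1..N}" using X assms(1,3) by (auto simp: shift_def)
  hence "apply_circ (take t (shift p C)) l (q + p - 1) \<in> generated N (shift p C) l" unfolding generated_def by blast
  thus ?thesis unfolding e .
qed

lemma is_circuit_append[simp]: "is_circuit n (A @ B) \<longleftrightarrow> is_circuit n A \<and> is_circuit n B"
  unfolding is_circuit_alt by (simp only: set_append ball_Un)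

lemma is_circuit_Nil[simp]: "is_circuit n []" by (simp add: is_circuit_alt)

lemma is_circuit_CX: "i \<noteq> j \<Longrightarrow> i \<in> {1..n} \<Longrightarrow> j \<in> {1..n} \<Longrightarrow> is_circuit n (CX i j)"
  unfolding is_circuit_alt CX_def gate_ok_def disj_ok_def by simp

lemma is_circuit_mono: "is_circuit n C \<Longrightarrow> n \<le> N \<Longrightarrow> is_circuit N C"
  unfolding is_circuit_alt gate_ok_def by (meson le_trans)

lemma is_circuit_shift:
  assumes "p \<ge> 1" "is_circuit m C" "m + p - 1 \<le> N"
  shows "is_circuit N (shift p C)"
  unfolding is_circuit_alt
proof
  fix M' assume "M' \<in> set (shift p C)"
  then obtain M where M: "M \<in> set C" "M' = gm (\<lambda>i. i + p - 1) M"
    unfolding shift_def map_gates_def gm_def by auto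
  have r: "gate_ok m M" and d: "disj_ok M"
    using assms(2) M(1) unfolding is_circuit_alt by auto
  have "gate_ok N M'" unfolding gate_ok_def
  proof (intro allI impI)
    fix a b assume "(a,b) \<in> M'"
    then obtain x y where xy: "(x,y) \<in> M" "a = x + p - 1" "b = y + p - 1" unfolding M(2) gm_def by auto
    hence "x \<noteq> y \<and> 1 \<le> x \<and> x \<le> m \<and> 1 \<le> y \<and> y \<le> m" using r unfolding gate_ok_def by blast
    thus "a \<noteq> b \<and> 1 \<le> a \<and> a \<le> N \<and> 1 \<le> b \<and> b \<le> N" using xy assms(1,3) by auto
  qed
  moreover have "disj_ok M'" unfolding disj_ok_def
  proof (intro allI impI)
    fix a b c d assume g: "(a,b) \<in> M'" "(c,d) \<in> M'" "(a,b) \<noteq> (c,d)"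
    then obtain x y x' y' where ab: "(x,y) \<in> M" "(x',y') \<in> M" "a = x+p-1" "b = y+p-1" "c = x'+p-1" "d = y'+p-1"
      unfolding M(2) gm_def by auto
    hence "(x,y) \<noteq> (x',y')" using g by auto
    hence "x \<noteq> x' \<and> x \<noteq> y' \<and> y \<noteq> x' \<and> y \<noteq> y'" using d ab(1,2) unfolding disj_ok_def by blast
    thus "a \<noteq> c \<and> a \<noteq> d \<and> b \<noteq> c \<and> b \<noteq> d" using ab assms(1) by auto
  qed
  ultimately show "gate_ok N M' \<and> disj_ok M'" by simp
qed




lemma clean_final:
  assumes "clean_special k m C"
  shows "\<exists>\<pi>. bij_betw \<pi> {1..m} {1..m} \<and> \<pi> 1 = 1 \<and> (\<forall>q\<in>{1..m}. apply_circ C l0 q = {\<pi> q})"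
  using assms unfolding clean_special_def by blast

lemma clean_gen:
  assumes "clean_special k m C" "T \<subseteq> {2..m}" "card T = k - 1"
  shows "insert 1 T \<in> generated m C l0"
  using assms unfolding clean_special_def by blast

lemma P1a:
  assumes cs: "clean_special k m C" and p0: "p0 \<ge> 1" and mn: "m + p0 - 1 = n" and m1: "m \<ge> 1"
    and l: "\<forall>q\<in>{p0..n}. l q = {\<tau> q}" and inj: "inj_on \<tau> {p0..n}"
    and S: "S \<subseteq> \<tau> ` {p0..n}" "\<tau> p0 \<in> S" "card S = k"
  shows "S \<in> generated n (shift p0 C) l"
proof -
  define \<tau>' where "\<tau>' i = \<tau> (i + p0 - 1)" for i
  define T where "T = {i \<in> {2..m}. \<tau>' i \<in> S}"
  have circ: "is_circuit m C" using cs unfolding clean_special_def by blast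
  have injt: "inj_on \<tau>' {1..m}"
  proof (rule inj_onI)
    fix x y assume "x \<in> {1..m}" "y \<in> {1..m}" "\<tau>' x = \<tau>' y"
    moreover have "x + p0 - 1 \<in> {p0..n}" "y + p0 - 1 \<in> {p0..n}" using \<open>x \<in> {1..m}\<close> \<open>y \<in> {1..m}\<close> p0 mn by auto
    ultimately have "x + p0 - 1 = y + p0 - 1" using inj_onD[OF inj] unfolding \<tau>'_def by blast
    thus "x = y" using p0 by simp
  qed
  have T: "T \<subseteq> {2..m}" unfolding T_def by auto
  have im: "\<tau>' ` T = S - {\<tau> p0}"
  proof
    show "\<tau>' ` T \<subseteq> S - {\<tau> p0}"
    proof
      fix x assume "x \<in> \<tau>' ` T"
      then obtain i where i: "i \<in> {2..m}" "\<tau>' i \<in> S" "x = \<tau>' i" unfolding T_def by auto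
      have "i + p0 - 1 \<noteq> p0" "i + p0 - 1 \<in> {p0..n}" "p0 \<in> {p0..n}" using i p0 mn by auto
      hence "\<tau>' i \<noteq> \<tau> p0" using inj unfolding \<tau>'_def inj_on_def by metis
      thus "x \<in> S - {\<tau> p0}" using i by simp
    qed
  next
    show "S - {\<tau> p0} \<subseteq> \<tau>' ` T"
    proof
      fix x assume x: "x \<in> S - {\<tau> p0}"
      then obtain y where y: "y \<in> {p0..n}" "x = \<tau> y" using S by auto
      hence "y \<noteq> p0" using x by auto
      hence "y - p0 + 1 \<in> {2..m}" "\<tau>' (y - p0 + 1) = x" using y p0 mn unfolding \<tau>'_def by auto
      thus "x \<in> \<tau>' ` T" unfolding T_def using x by (intro rev_image_eqI[of "y - p0 + 1"]) auto
    qed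
  qed
  have fS: "finite S" using S(1) finite_subset by blast
  have cT: "card T = k - 1"
  proof -
    have "inj_on \<tau>' T" by (rule inj_on_subset[OF injt]) (use T in auto)
    hence "card (\<tau>' ` T) = card T" by (rule card_image)
    thus ?thesis using im S(2,3) fS by simp
  qed
  have g: "insert 1 T \<in> generated m C l0" by (rule clean_gen[OF cs T cT])
  have "lsum (\<lambda>i. l (i + p0 - 1)) (insert 1 T) \<in> generated n (shift p0 C) l"
    by (rule shift_generated[OF p0 circ _ g]) (use mn in simp)
  moreover have "lsum (\<lambda>i. l (i + p0 - 1)) (insert 1 T) = \<tau>' ` insert 1 T"
  proof (rule lsum_inj)
    show "finite (insert 1 T)" using T finite_subset by auto
    have "insert 1 T \<subseteq> {1..m}" using T m1 by auto
    thus "inj_on \<tau>' (insert 1 T)" using injt by (rule inj_on_subset[rotated])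
    show "\<forall>i\<in>insert 1 T. l (i + p0 - 1) = {\<tau>' i}"
    proof
      fix i assume "i \<in> insert 1 T"
      hence "i \<in> {1..m}" using \<open>insert 1 T \<subseteq> {1..m}\<close> by blast
      hence "i + p0 - 1 \<in> {p0..n}" using p0 mn by auto
      thus "l (i + p0 - 1) = {\<tau>' i}" using l unfolding \<tau>'_def by blast
    qed
  qed
  moreover have "\<tau>' ` insert 1 T = S" using im S(2) p0 unfolding \<tau>'_def by auto
  ultimately show ?thesis by simp
qed

lemma P1b:
  assumes cs: "clean_special k m C" and p0: "p0 \<ge> 1" and mn: "m + p0 - 1 = n" and m1: "m \<ge> 1"
    and l: "\<forall>q\<in>{p0..n}. l q = {\<tau> q}" and inj: "inj_on \<tau> {p0..n}"
  shows "\<exists>\<tau>''. inj_on \<tau>'' {p0+1..n} \<and> \<tau>'' ` {p0+1..n} = \<tau> ` {p0+1..n} \<and>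
           (\<forall>q\<in>{p0+1..n}. apply_circ (shift p0 C) l q = {\<tau>'' q})"
proof -
  obtain \<pi> where \<pi>: "bij_betw \<pi> {1..m} {1..m}" "\<pi> 1 = 1" "\<forall>q\<in>{1..m}. apply_circ C l0 q = {\<pi> q}"
    using clean_final[OF cs] by blast
  have circ: "is_circuit m C" using cs unfolding clean_special_def by blast
  have \<pi>2: "bij_betw \<pi> {2..m} {2..m}"
  proof -
    have "bij_betw \<pi> ({1..m} - {1}) ({1..m} - {1})"
      by (rule bij_betw_DiffI[OF \<pi>(1), of "{1}" "{1}"]) (use \<pi>(2) m1 in \<open>auto simp: bij_betw_def\<close>)
    moreover have "{1..m} - {1} = {2..m}" by auto
    ultimately show ?thesis by simp
  qed
  define g where "g q = \<pi> (q - p0 + 1) + p0 - 1" for q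
  define \<tau>'' where "\<tau>'' q = \<tau> (g q)" for q
  have gim: "g ` {p0+1..n} = {p0+1..n}"
  proof -
    have a: "(\<lambda>q. q - p0 + 1) ` {p0+1..n} = {2..m}"
    proof
      show "(\<lambda>q. q - p0 + 1) ` {p0 + 1..n} \<subseteq> {2..m}" using mn p0 by auto
      show "{2..m} \<subseteq> (\<lambda>q. q - p0 + 1) ` {p0 + 1..n}"
      proof
        fix x assume "x \<in> {2..m}" thus "x \<in> (\<lambda>q. q - p0 + 1) ` {p0 + 1..n}"
          using mn p0 by (intro rev_image_eqI[of "x + p0 - 1"]) auto
      qed
    qed
    have b: "(\<lambda>i. i + p0 - 1) ` {2..m} = {p0+1..n}"
    proof
      show "(\<lambda>i. i + p0 - 1) ` {2..m} \<subseteq> {p0+1..n}" using mn p0 by auto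
      show "{p0+1..n} \<subseteq> (\<lambda>i. i + p0 - 1) ` {2..m}"
      proof
        fix x assume "x \<in> {p0+1..n}" thus "x \<in> (\<lambda>i. i + p0 - 1) ` {2..m}"
          using mn p0 by (intro rev_image_eqI[of "x - p0 + 1"]) auto
      qed
    qed
    have "g ` {p0+1..n} = (\<lambda>i. i + p0 - 1) ` (\<pi> ` ((\<lambda>q. q - p0 + 1) ` {p0+1..n}))"
      unfolding g_def image_image by simp
    also have "\<dots> = {p0+1..n}" unfolding a using \<pi>2 b by (simp add: bij_betw_def)
    finally show ?thesis .
  qed
  have ginj: "inj_on g {p0+1..n}"
  proof (rule inj_onI)
    fix x y assume xy: "x \<in> {p0+1..n}" "y \<in> {p0+1..n}" "g x = g y"
    hence "\<pi> (x - p0 + 1) = \<pi> (y - p0 + 1)" unfolding g_def using p0 by simp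
    moreover have "x - p0 + 1 \<in> {2..m}" "y - p0 + 1 \<in> {2..m}" using xy mn p0 by auto
    ultimately have "x - p0 + 1 = y - p0 + 1" using \<pi>2 unfolding bij_betw_def inj_on_def by blast
    thus "x = y" using xy by auto
  qed
  have inj'': "inj_on \<tau>'' {p0+1..n}"
  proof -
    have "inj_on \<tau> (g ` {p0+1..n})" using gim by (intro inj_on_subset[OF inj]) auto
    hence "inj_on (\<tau> \<circ> g) {p0+1..n}" using ginj by (intro comp_inj_on)
    thus ?thesis unfolding \<tau>''_def comp_def .
  qed
  have im'': "\<tau>'' ` {p0+1..n} = \<tau> ` {p0+1..n}"
    unfolding \<tau>''_def using gim by (metis image_image)
  have st: "apply_circ (shift p0 C) l q = {\<tau>'' q}" if q: "q \<in> {p0+1..n}" for q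
  proof -
    have qq: "q = (q - p0 + 1) + p0 - 1" and qm: "q - p0 + 1 \<in> {1..m}" using q p0 mn by auto
    have "apply_circ (shift p0 C) l q = lsum (\<lambda>i. l (i + p0 - 1)) (apply_circ C l0 (q - p0 + 1))"
      using shift_apply[OF p0 circ, of l "q - p0 + 1"] qq by simp
    also have "\<dots> = l (g q)" using \<pi>(3) qm unfolding g_def by simp
    also have "\<dots> = {\<tau>'' q}"
    proof -
      have "g q \<in> {p0+1..n}" using gim q by blast
      thus ?thesis unfolding \<tau>''_def using l by simp
    qed
    finally show ?thesis .
  qed
  show ?thesis using inj'' im'' st by blast
qed

lemma is_circuit_concat: "(\<forall>C\<in>set Cs. is_circuit n C) \<Longrightarrow> is_circuit n (concat Cs)"
  by (induction Cs) simp_all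

definition HH :: "(nat \<Rightarrow> circuit) \<Rightarrow> nat \<Rightarrow> nat \<Rightarrow> nat \<Rightarrow> circuit" where
  "HH G k n p0 = concat (map (\<lambda>p. shift p (G (n - p + 1))) [p0..<n - k + 2])"

lemma HH_step: "p0 < n - k + 2 \<Longrightarrow> HH G k n p0 = shift p0 (G (n - p0 + 1)) @ HH G k n (Suc p0)"
proof -
  assume "p0 < n - k + 2"
  hence "[p0..<n - k + 2] = p0 # [Suc p0..<n - k + 2]" by (rule upt_conv_Cons)
  thus ?thesis unfolding HH_def by (simp only: list.map concat.simps)
qed

lemma sub_drop: "S \<subseteq> \<tau> ` {p0..n} \<Longrightarrow> \<tau> p0 \<notin> S \<Longrightarrow> S \<subseteq> \<tau> ` {Suc p0..n}"
proof
  fix x assume a: "S \<subseteq> \<tau> ` {p0..n}" "\<tau> p0 \<notin> S" "x \<in> S"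
  then obtain y where y: "y \<in> {p0..n}" "x = \<tau> y" by blast
  hence "y \<noteq> p0" using a by blast
  thus "x \<in> \<tau> ` {Suc p0..n}" using y by auto
qed

lemma P1_main:
  assumes k: "k \<ge> 1" and G: "\<forall>m \<ge> k. clean_special k m (G m)" and n: "n \<ge> k"
  shows "p0 + j = n - k + 1 \<Longrightarrow> p0 \<ge> 1 \<Longrightarrow> \<forall>q\<in>{p0..n}. l q = {\<tau> q} \<Longrightarrow> inj_on \<tau> {p0..n} \<Longrightarrow>
     S \<subseteq> \<tau> ` {p0..n} \<Longrightarrow> card S = k \<Longrightarrow> S \<in> generated n (HH G k n p0) l"
proof (induction j arbitrary: p0 l \<tau>)
  case (0 p0 l \<tau>)
  have csm: "clean_special k (n - p0 + 1) (G (n - p0 + 1))" using G "0.prems" n by auto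
  have e0: "HH G k n (Suc p0) = []" unfolding HH_def using "0.prems" by simp
  have eq: "HH G k n p0 = shift p0 (G (n - p0 + 1))"
    using HH_step[of p0 n k G] "0.prems" e0 by simp
  have "\<tau> p0 \<in> S"
  proof (rule ccontr)
    assume "\<tau> p0 \<notin> S"
    hence "S \<subseteq> \<tau> ` {p0+1..n}" using "0.prems" sub_drop by simp
    hence "card S \<le> card (\<tau> ` {p0+1..n})" by (intro card_mono) auto
    also have "\<dots> \<le> n - p0" using card_image_le[of "{p0+1..n}" \<tau>] by simp
    finally show False using "0.prems" n k by simp
  qed
  thus ?case unfolding eq using "0.prems" n k by (intro P1a[OF csm]) auto
next
  case (Suc j p0 l \<tau>)
  have csm: "clean_special k (n - p0 + 1) (G (n - p0 + 1))" using G Suc.prems n by auto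
  have eq: "HH G k n p0 = shift p0 (G (n - p0 + 1)) @ HH G k n (Suc p0)"
    using HH_step[of p0 n k G] Suc.prems by simp
  show ?case
  proof (cases "\<tau> p0 \<in> S")
    case True
    thus ?thesis unfolding eq using Suc.prems n k by (intro generated_subset_mono P1a[OF csm]) auto
  next
    case False
    hence S': "S \<subseteq> \<tau> ` {p0+1..n}" using Suc.prems sub_drop by simp
    obtain \<tau>'' where t: "inj_on \<tau>'' {p0+1..n}" "\<tau>'' ` {p0+1..n} = \<tau> ` {p0+1..n}"
       "\<forall>q\<in>{p0+1..n}. apply_circ (shift p0 (G (n - p0 + 1))) l q = {\<tau>'' q}"
    proof -
      have "m + p0 - 1 = n" "m \<ge> 1" if "m = n - p0 + 1" for m using that Suc.prems n by auto
      hence "\<exists>\<tau>''. inj_on \<tau>'' {p0+1..n} \<and> \<tau>'' ` {p0+1..n} = \<tau> ` {p0+1..n} \<and>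
           (\<forall>q\<in>{p0+1..n}. apply_circ (shift p0 (G (n - p0 + 1))) l q = {\<tau>'' q})"
        using P1b[OF csm, of p0 n l \<tau>] Suc.prems by simp
      thus ?thesis using that by blast
    qed
    have "S \<in> generated n (HH G k n (Suc p0)) (apply_circ (shift p0 (G (n - p0 + 1))) l)"
      using Suc.IH[of "Suc p0" "apply_circ (shift p0 (G (n - p0 + 1))) l" \<tau>''] Suc.prems t S' by simp
    thus ?thesis unfolding eq by (rule generated_subset_mono2)
  qed
qed

lemma HH_circuit:
  assumes G: "\<forall>m \<ge> k. clean_special k m (G m)" and n: "n \<ge> k" "p0 \<ge> 1" "k \<ge> 1"
  shows "is_circuit n (HH G k n p0)"
  unfolding HH_def
proof (rule is_circuit_concat, intro ballI)
  fix C assume "C \<in> set (map (\<lambda>p. shift p (G (n - p + 1))) [p0..<n - k + 2])"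
  then obtain p where p: "p \<in> set [p0..<n - k + 2]" and C: "C = shift p (G (n - p + 1))" by auto
  hence p': "p0 \<le> p" "p < n - k + 2" by auto
  hence "clean_special k (n - p + 1) (G (n - p + 1))" using G n by simp
  hence "is_circuit (n - p + 1) (G (n - p + 1))" unfolding clean_special_def by blast
  moreover have "n - p + 1 + p - 1 \<le> n" using p' n by simp
  ultimately show "is_circuit n C" unfolding C using p' n by (intro is_circuit_shift) auto
qed

theorem part1:
  assumes "k \<ge> 2" "\<forall>m \<ge> k. clean_special k m (G m)" "n \<ge> k"
  shows "k_body_gen k n (full_gen G k n)"
proof -
  have fg: "full_gen G k n = HH G k n 1" unfolding full_gen_def HH_def by simp
  show ?thesis unfolding k_body_gen_def fg
  proof (intro conjI allI impI)
    show "is_circuit n (HH G k n 1)" using HH_circuit assms by auto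
    show "k \<le> n" by fact
    fix S assume S: "S \<subseteq> {1..n} \<and> card S = k"
    show "S \<in> generated n (HH G k n 1) l0"
      using P1_main[OF _ assms(2,3), of 1 "n - k" l0 id S] assms S by (auto simp: l0_def)
  qed
qed




section \<open>Part 2: the recursive construction\<close>

lemma endo_image:
  assumes "finite A" "inj_on f A" "f ` A \<subseteq> A" shows "f ` A = A"
  using assms by (simp add: card_image card_subset_eq)

lemma shift_bij:
  fixes m n p0 :: nat
  assumes \<pi>: "bij_betw \<pi> {1..m} {1..m}" "\<pi> 1 = 1" and p0: "p0 \<ge> 1" and mn: "m + p0 - 1 = n" and m1: "m \<ge> 1"
  shows "inj_on (\<lambda>q. \<pi> (q - p0 + 1) + p0 - 1) {p0+1..n} \<and> (\<lambda>q. \<pi> (q - p0 + 1) + p0 - 1) ` {p0+1..n} = {p0+1..n}"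
proof -
  define g where "g q = \<pi> (q - p0 + 1) + p0 - 1" for q
  have \<pi>2: "bij_betw \<pi> {2..m} {2..m}"
  proof -
    have "bij_betw \<pi> ({1..m} - {1}) ({1..m} - {1})"
      by (rule bij_betw_DiffI[OF \<pi>(1), of "{1}" "{1}"]) (use \<pi>(2) m1 in \<open>auto simp: bij_betw_def\<close>)
    moreover have "{1..m} - {1} = {2..m}" by auto
    ultimately show ?thesis by simp
  qed
  have a: "(\<lambda>q. q - p0 + 1) ` {p0+1..n} = {2..m}"
  proof
    show "(\<lambda>q. q - p0 + 1) ` {p0 + 1..n} \<subseteq> {2..m}" using mn p0 by auto
    show "{2..m} \<subseteq> (\<lambda>q. q - p0 + 1) ` {p0 + 1..n}"
    proof
      fix x assume "x \<in> {2..m}" thus "x \<in> (\<lambda>q. q - p0 + 1) ` {p0 + 1..n}"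
        using mn p0 by (intro rev_image_eqI[of "x + p0 - 1"]) auto
    qed
  qed
  have b: "(\<lambda>i. i + p0 - 1) ` {2..m} = {p0+1..n}"
  proof
    show "(\<lambda>i. i + p0 - 1) ` {2..m} \<subseteq> {p0+1..n}" using mn p0 by auto
    show "{p0+1..n} \<subseteq> (\<lambda>i. i + p0 - 1) ` {2..m}"
    proof
      fix x assume "x \<in> {p0+1..n}" thus "x \<in> (\<lambda>i. i + p0 - 1) ` {2..m}"
        using mn p0 by (intro rev_image_eqI[of "x - p0 + 1"]) auto
    qed
  qed
  have "g ` {p0+1..n} = (\<lambda>i. i + p0 - 1) ` (\<pi> ` ((\<lambda>q. q - p0 + 1) ` {p0+1..n}))"
    unfolding g_def image_image by simp
  also have "\<dots> = {p0+1..n}" unfolding a using \<pi>2 b by (simp add: bij_betw_def)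
  finally have gim: "g ` {p0+1..n} = {p0+1..n}" .
  have ginj: "inj_on g {p0+1..n}"
  proof (rule inj_onI)
    fix x y assume xy: "x \<in> {p0+1..n}" "y \<in> {p0+1..n}" "g x = g y"
    hence "\<pi> (x - p0 + 1) = \<pi> (y - p0 + 1)" unfolding g_def using p0 by simp
    moreover have "x - p0 + 1 \<in> {2..m}" "y - p0 + 1 \<in> {2..m}" using xy mn p0 by auto
    ultimately have "x - p0 + 1 = y - p0 + 1" using \<pi>2 unfolding bij_betw_def inj_on_def by blast
    thus "x = y" using xy by auto
  qed
  show ?thesis using gim ginj unfolding g_def by simp
qed

lemma apply_SW: "a \<noteq> b \<Longrightarrow> apply_circ (SW a b) l = l(a := l b, b := l a)"
  unfolding SW_def by (auto simp: fun_eq_iff labmul_simps)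

lemma is_circuit_SW: "a \<noteq> b \<Longrightarrow> a \<in> {1..n} \<Longrightarrow> b \<in> {1..n} \<Longrightarrow> is_circuit n (SW a b)"
  unfolding SW_def by (simp add: is_circuit_CX)

lemma lab12: "labmul {1::nat} {2} = {1,2}" unfolding labmul_def by auto

lemma FP:
  assumes k: "k \<ge> 3" and F: "\<forall>m \<ge> k-1. clean_special (k-1) m (F m)" and n: "n \<ge> k"
  shows "is_circuit n (CX 1 2 @ shift 2 (F (n-1)))"
    and "\<forall>T. T \<subseteq> {2..n} \<longrightarrow> 2 \<in> T \<longrightarrow> card T = k-1 \<longrightarrow> insert 1 T \<in> generated n (CX 1 2 @ shift 2 (F (n-1))) l0"
    and "\<exists>\<rho>. inj_on \<rho> {3..n} \<and> \<rho> ` {3..n} = {3..n} \<and> apply_circ (CX 1 2 @ shift 2 (F (n-1))) l0 1 = {1} \<and>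
           apply_circ (CX 1 2 @ shift 2 (F (n-1))) l0 2 = {1,2} \<and>
           (\<forall>q\<in>{3..n}. apply_circ (CX 1 2 @ shift 2 (F (n-1))) l0 q = {\<rho> q})"
proof -
  have cs: "clean_special (k-1) (n-1) (F (n-1))" using F n by simp
  have circ: "is_circuit (n-1) (F (n-1))" using cs unfolding clean_special_def by blast
  define l1 where "l1 = l0(2 := {1,2})"
  have "labmul (l0 1) (l0 2) = {1,2}" by (auto simp: l0_def labmul_def)
  hence l1e: "apply_circ (CX 1 2) l0 = l1" unfolding l1_def apply_CX by simp
  show "is_circuit n (CX 1 2 @ shift 2 (F (n-1)))"
  proof -
    have "is_circuit n (shift 2 (F (n-1)))" by (rule is_circuit_shift[OF _ circ]) (use k n in auto)
    moreover have "is_circuit n (CX 1 2)" by (rule is_circuit_CX) (use k n in auto)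
    ultimately show ?thesis by simp
  qed
  show "\<forall>T. T \<subseteq> {2..n} \<longrightarrow> 2 \<in> T \<longrightarrow> card T = k-1 \<longrightarrow> insert 1 T \<in> generated n (CX 1 2 @ shift 2 (F (n-1))) l0"
  proof (intro allI impI)
    fix T assume T: "T \<subseteq> {2..n}" "2 \<in> T" "card T = k - 1"
    define T2 where "T2 = T - {2}"
    define T' where "T' = (\<lambda>i. i - 1) ` T2"
    have T2s: "T2 \<subseteq> {3..n}" using T unfolding T2_def by auto
    have fT2: "finite T2" using T2s finite_subset by blast
    have cT2: "card T2 = k - 2" using T k unfolding T2_def by (simp add: finite_subset[OF T(1)])
    have injm: "inj_on (\<lambda>i. i - 1) T2"
    proof (rule inj_onI)
      fix x y assume "x \<in> T2" "y \<in> T2" "x - 1 = y - 1"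
      moreover have "x \<ge> 3" "y \<ge> 3" using T2s \<open>x \<in> T2\<close> \<open>y \<in> T2\<close> by auto
      ultimately show "x = y" by simp
    qed
    have T's: "T' \<subseteq> {2..n-1}"
    proof
      fix y assume "y \<in> T'"
      then obtain x where x: "x \<in> T2" "y = x - 1" unfolding T'_def by blast
      hence "x \<in> {3..n}" using T2s by blast
      thus "y \<in> {2..n-1}" using x by auto
    qed
    have cT': "card T' = k - 1 - 1" unfolding T'_def using card_image[OF injm] cT2 by simp
    have g: "insert 1 T' \<in> generated (n-1) (F (n-1)) l0" by (rule clean_gen[OF cs T's cT'])
    have "lsum (\<lambda>i. l1 (i + 2 - 1)) (insert 1 T') \<in> generated n (shift 2 (F (n-1))) l1"
      by (rule shift_generated[OF _ circ _ g]) (use n k in auto)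
    moreover have "lsum (\<lambda>i. l1 (i + 2 - 1)) (insert 1 T') = insert 1 T"
    proof -
      have fT': "finite T'" unfolding T'_def using fT2 by simp
      have n1: "1 \<notin> T'" using T's by auto
      have "lsum (\<lambda>i. l1 (i + 2 - 1)) T' = (\<lambda>i. i + 1) ` T'"
        by (rule lsum_inj[OF fT']) (use T's in \<open>auto simp: inj_on_def l1_def l0_def\<close>)
      also have "\<dots> = T2"
      proof -
        have e: "x - 1 + 1 = x" if "x \<in> T2" for x
        proof -
          have "x \<in> {3..n}" using T2s that by blast
          thus ?thesis by simp
        qed
        have "(\<lambda>x. x - 1 + 1) ` T2 = (\<lambda>x. x) ` T2" by (rule image_cong[OF refl e])
        thus ?thesis unfolding T'_def image_image by simp
      qed
      finally have "lsum (\<lambda>i. l1 (i + 2 - 1)) (insert 1 T') = labmul {1,2} T2"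
        using lsum_insert[OF fT' n1] by (simp add: l1_def)
      also have "\<dots> = insert 1 T" using T2s T unfolding labmul_def T2_def by auto
      finally show ?thesis .
    qed
    ultimately have "insert 1 T \<in> generated n (shift 2 (F (n-1))) (apply_circ (CX 1 2) l0)" using l1e by simp
    thus "insert 1 T \<in> generated n (CX 1 2 @ shift 2 (F (n-1))) l0" by (rule generated_subset_mono2)
  qed
  obtain \<pi> where \<pi>: "bij_betw \<pi> {1..n-1} {1..n-1}" "\<pi> 1 = 1" "\<forall>q\<in>{1..n-1}. apply_circ (F (n-1)) l0 q = {\<pi> q}"
    using clean_final[OF cs] by blast
  define \<rho> where "\<rho> q = \<pi> (q - 2 + 1) + 2 - 1" for q
  have rb: "inj_on \<rho> {3..n} \<and> \<rho> ` {3..n} = {3..n}"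
    using shift_bij[OF \<pi>(1,2), of 2 n] n k unfolding \<rho>_def by simp
  have fin: "apply_circ (shift 2 (F (n-1))) l1 q = l1 (\<pi> (q - 1) + 1)" if q: "q \<in> {2..n}" for q
  proof -
    have "apply_circ (shift 2 (F (n-1))) l1 ((q - 1) + 2 - 1) = lsum (\<lambda>i. l1 (i + 2 - 1)) (apply_circ (F (n-1)) l0 (q - 1))"
      by (rule shift_apply[OF _ circ]) simp
    moreover have "apply_circ (F (n-1)) l0 (q - 1) = {\<pi> (q - 1)}"
    proof -
      have "q - 1 \<in> {1..n-1}" using q by auto
      thus ?thesis using \<pi>(3) by blast
    qed
    moreover have "(q - 1) + 2 - 1 = q" using q by auto
    ultimately show ?thesis by simp
  qed
  have f1: "apply_circ (shift 2 (F (n-1))) l1 1 = l1 1"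
    by (rule shift_apply_out[OF _ circ]) simp_all
  have rng: "\<pi> (q - 1) \<in> {2..n-1}" if q: "q \<in> {3..n}" for q
  proof -
    have "q - 1 \<in> {1..n-1}" "q - 1 \<noteq> 1" "1 \<in> {1..n-1}" using q by auto
    hence "\<pi> (q - 1) \<in> {1..n-1}" "\<pi> (q - 1) \<noteq> \<pi> 1" using \<pi>(1) unfolding bij_betw_def inj_on_def by auto
    thus ?thesis using \<pi>(2) by auto
  qed
  show "\<exists>\<rho>. inj_on \<rho> {3..n} \<and> \<rho> ` {3..n} = {3..n} \<and> apply_circ (CX 1 2 @ shift 2 (F (n-1))) l0 1 = {1} \<and>
           apply_circ (CX 1 2 @ shift 2 (F (n-1))) l0 2 = {1,2} \<and>
           (\<forall>q\<in>{3..n}. apply_circ (CX 1 2 @ shift 2 (F (n-1))) l0 q = {\<rho> q})"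
  proof (intro exI conjI)
    show "inj_on \<rho> {3..n}" "\<rho> ` {3..n} = {3..n}" using rb by auto
    show "apply_circ (CX 1 2 @ shift 2 (F (n-1))) l0 1 = {1}" using f1 l1e by (simp add: l1_def l0_def)
    show "apply_circ (CX 1 2 @ shift 2 (F (n-1))) l0 2 = {1,2}" using fin[of 2] l1e n k \<pi>(2) by (simp add: l1_def)
    show "\<forall>q\<in>{3..n}. apply_circ (CX 1 2 @ shift 2 (F (n-1))) l0 q = {\<rho> q}"
    proof
      fix q assume q: "q \<in> {3..n}"
      have "\<pi> (q - 1) + 1 \<noteq> 2" using rng[OF q] by auto
      moreover have "\<rho> q = \<pi> (q - 1) + 1"
      proof -
        have h: "q - 2 + 1 = q - 1" using q by auto
        show ?thesis unfolding \<rho>_def h by simp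
      qed
      ultimately show "apply_circ (CX 1 2 @ shift 2 (F (n-1))) l0 q = {\<rho> q}"
        using fin[of q] q l1e by (simp add: l1_def l0_def)
    qed
  qed
qed

definition Wfin :: "nat \<Rightarrow> nat \<Rightarrow> (nat \<Rightarrow> nat) \<Rightarrow> (nat \<Rightarrow> nat set) \<Rightarrow> bool" where
  "Wfin n k \<tau> l \<longleftrightarrow> inj_on \<tau> {1..n} \<and> \<tau> ` {1..n} = {1..n} \<and> \<tau> (n - k + 1) = 1 \<and>
     (\<forall>q\<in>{1..n}. l q = (if q \<le> n - k + 2 \<and> q \<noteq> n - k + 1 then {1, \<tau> q} else {\<tau> q}))"

lemma WL:
  assumes k: "k \<ge> 3" and F: "\<forall>m \<ge> k-1. clean_special (k-1) m (F m)"
  shows "is_circuit (k + d) (Wc F k d) \<and>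
    (\<forall>T. T \<subseteq> {2..k + d} \<longrightarrow> card T = k - 1 \<longrightarrow> insert 1 T \<in> generated (k + d) (Wc F k d) l0) \<and>
    (\<exists>\<tau>. Wfin (k + d) k \<tau> (apply_circ (Wc F k d) l0))"
proof (induction d)
  case 0
  have n: "k \<ge> k" by simp
  note fp = FP[OF k F n]
  have e: "Wc F k 0 = CX 1 2 @ shift 2 (F (k-1))" by simp
  show ?case unfolding e add_0_right
  proof (intro conjI allI impI)
    show "is_circuit k (CX 1 2 @ shift 2 (F (k - 1)))" by (rule fp(1))
  next
    fix T assume T: "T \<subseteq> {2..k}" "card T = k - 1"
    have "T = {2..k}" using T by (intro card_subset_eq) auto
    hence "2 \<in> T" using k by auto
    thus "insert 1 T \<in> generated k (CX 1 2 @ shift 2 (F (k - 1))) l0" using fp(2) T by blast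
  next
    obtain \<rho> where \<rho>: "inj_on \<rho> {3..k}" "\<rho> ` {3..k} = {3..k}" "apply_circ (CX 1 2 @ shift 2 (F (k-1))) l0 1 = {1}"
           "apply_circ (CX 1 2 @ shift 2 (F (k-1))) l0 2 = {1,2}"
           "\<forall>q\<in>{3..k}. apply_circ (CX 1 2 @ shift 2 (F (k-1))) l0 q = {\<rho> q}"
      using fp(3) by blast
    define \<tau> where "\<tau> q = (if q \<le> 2 then q else \<rho> q)" for q
    have rng: "\<tau> q \<in> {1..k}" if "q \<in> {1..k}" for q
    proof (cases "q \<le> 2")
      case True thus ?thesis using that k unfolding \<tau>_def by auto
    next
      case False
      hence "q \<in> {3..k}" using that by auto
      hence "\<rho> q \<in> {3..k}" using \<rho>(2) by blast
      thus ?thesis using False unfolding \<tau>_def by auto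
    qed
    have inj: "inj_on \<tau> {1..k}"
    proof (rule inj_onI)
      fix x y assume xy: "x \<in> {1..k}" "y \<in> {1..k}" "\<tau> x = \<tau> y"
      have r3: "\<rho> z \<in> {3..k}" if "z \<in> {3..k}" for z using \<rho>(2) that by blast
      show "x = y"
      proof (cases "x \<le> 2"; cases "y \<le> 2")
        assume "x \<le> 2" "y \<le> 2" thus ?thesis using xy unfolding \<tau>_def by simp
      next
        assume a: "x \<le> 2" "\<not> y \<le> 2"
        hence "\<rho> y \<in> {3..k}" using xy r3 by auto
        thus ?thesis using a xy unfolding \<tau>_def by auto
      next
        assume a: "\<not> x \<le> 2" "y \<le> 2"
        hence "\<rho> x \<in> {3..k}" using xy r3 by auto
        thus ?thesis using a xy unfolding \<tau>_def by auto
      next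
        assume a: "\<not> x \<le> 2" "\<not> y \<le> 2"
        hence "x \<in> {3..k}" "y \<in> {3..k}" "\<rho> x = \<rho> y" using xy unfolding \<tau>_def by auto
        thus ?thesis using \<rho>(1) by (auto dest: inj_onD)
      qed
    qed
    show "\<exists>\<tau>. Wfin k k \<tau> (apply_circ (CX 1 2 @ shift 2 (F (k - 1))) l0)"
      unfolding Wfin_def
    proof (intro exI conjI)
      show "inj_on \<tau> {1..k}" by (rule inj)
      show "\<tau> ` {1..k} = {1..k}" by (rule endo_image) (use inj rng in auto)
      show "\<tau> (k - k + 1) = 1" unfolding \<tau>_def by simp
      show "\<forall>q\<in>{1..k}. apply_circ (CX 1 2 @ shift 2 (F (k - 1))) l0 q =
          (if q \<le> k - k + 2 \<and> q \<noteq> k - k + 1 then {1, \<tau> q} else {\<tau> q})"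
      proof
        fix q assume q: "q \<in> {1..k}"
        consider "q = 1" | "q = 2" | "q \<in> {3..k}" using q by force
        thus "apply_circ (CX 1 2 @ shift 2 (F (k - 1))) l0 q =
          (if q \<le> k - k + 2 \<and> q \<noteq> k - k + 1 then {1, \<tau> q} else {\<tau> q})"
        proof cases
          case 1 thus ?thesis using \<rho>(3) unfolding \<tau>_def by simp
        next
          case 2 thus ?thesis using \<rho>(4) unfolding \<tau>_def by simp
        next
          case 3 thus ?thesis using \<rho>(5) unfolding \<tau>_def by auto
        qed
      qed
    qed
  qed
next
  case (Suc d)
  define n where "n = k + Suc d"
  have n: "n \<ge> k" "n \<ge> 4" "n \<ge> k + 1" using k unfolding n_def by auto
  note fp = FP[OF k F n(1)]
  define P where "P = CX 1 2 @ shift 2 (F (n-1))"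
  define W' where "W' = Wc F k d"
  have nd: "k + d = n - 1" unfolding n_def by simp
  have e: "Wc F k (Suc d) = P @ (SW 1 2 @ shift 2 W')"
    unfolding P_def W'_def n_def by simp
  have IHc: "is_circuit (n-1) W'" and
       IHg: "\<forall>T. T \<subseteq> {2..n-1} \<longrightarrow> card T = k - 1 \<longrightarrow> insert 1 T \<in> generated (n-1) W' l0" and
       IHf: "\<exists>\<tau>. Wfin (n-1) k \<tau> (apply_circ W' l0)"
    using Suc.IH unfolding nd W'_def by auto
  obtain \<rho> where \<rho>: "inj_on \<rho> {3..n}" "\<rho> ` {3..n} = {3..n}" "apply_circ P l0 1 = {1}"
           "apply_circ P l0 2 = {1,2}"
           "\<forall>q\<in>{3..n}. apply_circ P l0 q = {\<rho> q}"
    using fp(3) unfolding P_def by blast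
  have r3: "\<rho> z \<in> {3..n}" if "z \<in> {3..n}" for z using \<rho>(2) that by blast
  define lS where "lS = (apply_circ P l0)(1 := {1,2}, 2 := {1})"
  have lSe: "apply_circ (SW 1 2) (apply_circ P l0) = lS" unfolding lS_def using \<rho>(3,4) by (simp add: apply_SW)
  have lS3: "lS q = {\<rho> q}" if "q \<in> {3..n}" for q using \<rho>(5) that unfolding lS_def by auto
  show ?case unfolding e n_def[symmetric]
  proof (intro conjI allI impI)
    show "is_circuit n (P @ SW 1 2 @ shift 2 W')"
    proof -
      have "is_circuit n P" unfolding P_def by (rule fp(1))
      moreover have "is_circuit n (SW 1 2)" by (rule is_circuit_SW) (use n in auto)
      moreover have "is_circuit n (shift 2 W')" by (rule is_circuit_shift[OF _ IHc]) (use n in auto)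
      ultimately show ?thesis by simp
    qed
  next
    fix T assume T: "T \<subseteq> {2..n}" "card T = k - 1"
    show "insert 1 T \<in> generated n (P @ SW 1 2 @ shift 2 W') l0"
    proof (cases "2 \<in> T")
      case True
      hence "insert 1 T \<in> generated n P l0" using fp(2) T unfolding P_def by blast
      thus ?thesis by (rule generated_subset_mono)
    next
      case False
      have T3: "T \<subseteq> {3..n}"
      proof
        fix x assume x: "x \<in> T"
        hence "x \<in> {2..n}" using T by blast
        moreover have "x \<noteq> 2" using x False by blast
        ultimately show "x \<in> {3..n}" by auto
      qed
      define T'' where "T'' = {i \<in> {3..n}. \<rho> i \<in> T}"
      have T''s: "T'' \<subseteq> {3..n}" unfolding T''_def by auto
      have imT'': "\<rho> ` T'' = T"
      proof
        show "\<rho> ` T'' \<subseteq> T" unfolding T''_def by auto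
        show "T \<subseteq> \<rho> ` T''"
        proof
          fix x assume x: "x \<in> T"
          hence "x \<in> \<rho> ` {3..n}" using T3 \<rho>(2) by blast
          then obtain y where "y \<in> {3..n}" "x = \<rho> y" by blast
          thus "x \<in> \<rho> ` T''" unfolding T''_def using x by blast
        qed
      qed
      have cT'': "card T'' = k - 1"
        using T(2) imT'' card_image[OF inj_on_subset[OF \<rho>(1) T''s]] by simp
      define T' where "T' = (\<lambda>i. i - 1) ` T''"
      have injm: "inj_on (\<lambda>i. i - 1) T''"
      proof (rule inj_onI)
        fix x y assume "x \<in> T''" "y \<in> T''" "x - 1 = y - 1"
        moreover have "x \<ge> 3" "y \<ge> 3" using T''s \<open>x \<in> T''\<close> \<open>y \<in> T''\<close> by auto
        ultimately show "x = y" by simp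
      qed
      have T's: "T' \<subseteq> {2..n-1}"
      proof
        fix y assume "y \<in> T'"
        then obtain x where x: "x \<in> T''" "y = x - 1" unfolding T'_def by blast
        hence "x \<in> {3..n}" using T''s by blast
        thus "y \<in> {2..n-1}" using x by auto
      qed
      have cT': "card T' = k - 1" unfolding T'_def using card_image[OF injm] cT'' by simp
      have g: "insert 1 T' \<in> generated (n-1) W' l0" using IHg T's cT' by blast
      have "lsum (\<lambda>i. lS (i + 2 - 1)) (insert 1 T') \<in> generated n (shift 2 W') lS"
        by (rule shift_generated[OF _ IHc _ g]) (use n in auto)
      moreover have "lsum (\<lambda>i. lS (i + 2 - 1)) (insert 1 T') = insert 1 T"
      proof -
        have fT': "finite T'" using T's finite_subset by blast
        have n1: "1 \<notin> T'" using T's by auto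
        have "lsum (\<lambda>i. lS (i + 2 - 1)) T' = (\<lambda>i. \<rho> (i + 1)) ` T'"
        proof (rule lsum_inj[OF fT'])
          show "inj_on (\<lambda>i. \<rho> (i + 1)) T'"
          proof (rule inj_onI)
            fix x y assume xy: "x \<in> T'" "y \<in> T'" "\<rho> (x + 1) = \<rho> (y + 1)"
            have "x + 1 \<in> {3..n}" "y + 1 \<in> {3..n}" using subsetD[OF T's xy(1)] subsetD[OF T's xy(2)] n by auto
            hence "x + 1 = y + 1" using xy(3) \<rho>(1) by (auto dest: inj_onD)
            thus "x = y" by simp
          qed
          show "\<forall>i\<in>T'. lS (i + 2 - 1) = {\<rho> (i + 1)}"
          proof
            fix i assume "i \<in> T'"
            hence "i + 1 \<in> {3..n}" using subsetD[OF T's] n by fastforce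
            thus "lS (i + 2 - 1) = {\<rho> (i + 1)}" using lS3 by simp
          qed
        qed
        also have "\<dots> = \<rho> ` ((\<lambda>i. i + 1) ` T')" by (simp add: image_image)
        also have "(\<lambda>i. i + 1) ` T' = T''"
        proof -
          have e: "x - 1 + 1 = x" if "x \<in> T''" for x
          proof -
            have "x \<in> {3..n}" using T''s that by blast
            thus ?thesis by simp
          qed
          have "(\<lambda>x. x - 1 + 1) ` T'' = (\<lambda>x. x) ` T''" by (rule image_cong[OF refl e])
          thus ?thesis unfolding T'_def image_image by simp
        qed
        finally have "lsum (\<lambda>i. lS (i + 2 - 1)) (insert 1 T') = labmul {1} T"
          using lsum_insert[OF fT' n1] imT'' by (simp add: lS_def)
        also have "\<dots> = insert 1 T" using T3 unfolding labmul_def by auto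
        finally show ?thesis .
      qed
      ultimately have "insert 1 T \<in> generated n (shift 2 W') (apply_circ (SW 1 2) (apply_circ P l0))"
        using lSe by simp
      hence "insert 1 T \<in> generated n (SW 1 2 @ shift 2 W') (apply_circ P l0)"
        by (rule generated_subset_mono2)
      thus ?thesis by (rule generated_subset_mono2)
    qed
  next
    obtain \<tau>' where \<tau>': "Wfin (n-1) k \<tau>' (apply_circ W' l0)" using IHf by blast
    have t'inj: "inj_on \<tau>' {1..n-1}" and t'im: "\<tau>' ` {1..n-1} = {1..n-1}" and t'1: "\<tau>' (n - k) = 1"
      and t'f: "\<forall>q\<in>{1..n-1}. apply_circ W' l0 q = (if q \<le> n - 1 - k + 2 \<and> q \<noteq> n - 1 - k + 1 then {1, \<tau>' q} else {\<tau>' q})"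
    proof -
      have nk: "n - 1 - k + 1 = n - k" using n(3) by auto
      show "inj_on \<tau>' {1..n-1}" "\<tau>' ` {1..n-1} = {1..n-1}" "\<tau>' (n - k) = 1"
        "\<forall>q\<in>{1..n-1}. apply_circ W' l0 q = (if q \<le> n - 1 - k + 2 \<and> q \<noteq> n - 1 - k + 1 then {1, \<tau>' q} else {\<tau>' q})"
        using \<tau>' unfolding Wfin_def nk by auto
    qed
    have t'r: "\<tau>' j \<in> {1..n-1}" if "j \<in> {1..n-1}" for j using t'im that by blast
    have nk1: "n - k \<in> {1..n-1}" using n k unfolding n_def by auto
    have t'ne: "\<tau>' j \<noteq> 1" if "j \<in> {1..n-1}" "j \<noteq> n - k" for j
      using that t'1 nk1 t'inj by (metis inj_onD)
    define \<tau> where "\<tau> q = (if q = 1 then 2 else if \<tau>' (q - 1) = 1 then 1 else \<rho> (\<tau>' (q - 1) + 1))" for q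
    define lF where "lF = apply_circ (shift 2 W') lS"
    have lFe: "apply_circ (P @ SW 1 2 @ shift 2 W') l0 = lF" unfolding lF_def using lSe by simp
    have lF1: "lF 1 = {1,2}" unfolding lF_def
      by (subst shift_apply_out[OF _ IHc]) (simp_all add: lS_def)
    have lFq: "lF q = lsum (\<lambda>i. lS (i + 1)) (apply_circ W' l0 (q - 1))" if "q \<in> {2..n}" for q
    proof -
      have "lF ((q - 1) + 2 - 1) = lsum (\<lambda>i. lS (i + 2 - 1)) (apply_circ W' l0 (q - 1))"
        unfolding lF_def by (rule shift_apply[OF _ IHc]) simp
      moreover have "(q - 1) + 2 - 1 = q" using that by auto
      ultimately show ?thesis by simp
    qed
    have lS2: "lS 2 = {1}" unfolding lS_def by simp
    have rngt: "\<tau> q \<in> {1..n}" if "q \<in> {1..n}" for q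
    proof -
      consider "q = 1" | "q \<noteq> 1" "\<tau>' (q - 1) = 1" | "q \<noteq> 1" "\<tau>' (q - 1) \<noteq> 1" by blast
      thus ?thesis
      proof cases
        case 1 thus ?thesis using n unfolding \<tau>_def by auto
      next
        case 2 thus ?thesis using n unfolding \<tau>_def by auto
      next
        case 3
        hence "q - 1 \<in> {1..n-1}" using that by auto
        hence "\<tau>' (q - 1) \<in> {1..n-1}" by (rule t'r)
        hence "\<tau>' (q - 1) + 1 \<in> {3..n}" using 3 by auto
        hence "\<rho> (\<tau>' (q - 1) + 1) \<in> {3..n}" by (rule r3)
        thus ?thesis using 3 unfolding \<tau>_def by auto
      qed
    qed
    have vals: "\<tau> q = 2 \<longleftrightarrow> q = 1" if "q \<in> {1..n}" for q
    proof -
      have "q \<noteq> 1 \<Longrightarrow> \<tau>' (q - 1) \<noteq> 1 \<Longrightarrow> \<rho> (\<tau>' (q - 1) + 1) \<in> {3..n}"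
      proof -
        assume a: "q \<noteq> 1" "\<tau>' (q - 1) \<noteq> 1"
        hence "q - 1 \<in> {1..n-1}" using that by auto
        hence "\<tau>' (q - 1) \<in> {1..n-1}" by (rule t'r)
        hence "\<tau>' (q - 1) + 1 \<in> {3..n}" using a by auto
        thus ?thesis by (rule r3)
      qed
      thus ?thesis unfolding \<tau>_def by auto
    qed
    have injt: "inj_on \<tau> {1..n}"
    proof (rule inj_onI)
      fix x y assume xy: "x \<in> {1..n}" "y \<in> {1..n}" "\<tau> x = \<tau> y"
      show "x = y"
      proof (cases "x = 1 \<or> y = 1")
        case True thus ?thesis using vals[OF xy(1)] vals[OF xy(2)] xy(3) by auto
      next
        case False
        hence xy1: "x - 1 \<in> {1..n-1}" "y - 1 \<in> {1..n-1}" using xy by auto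
        show ?thesis
        proof (cases "\<tau>' (x - 1) = 1")
          case True
          hence "\<tau> x = 1" using False unfolding \<tau>_def by simp
          hence "\<tau>' (y - 1) = 1"
          proof -
            assume "\<tau> x = 1"
            hence "\<tau> y = 1" using xy by simp
            show ?thesis
            proof (rule ccontr)
              assume "\<tau>' (y - 1) \<noteq> 1"
              hence "\<tau>' (y - 1) + 1 \<in> {3..n}" using t'r[OF xy1(2)] by auto
              hence "\<rho> (\<tau>' (y - 1) + 1) \<in> {3..n}" by (rule r3)
              thus False using \<open>\<tau> y = 1\<close> False \<open>\<tau>' (y - 1) \<noteq> 1\<close> unfolding \<tau>_def by auto
            qed
          qed
          hence "x - 1 = y - 1" using True xy1 t'inj by (metis inj_onD)
          thus ?thesis using False xy by auto
        next
          case nx: False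
          hence rx: "\<tau>' (x - 1) + 1 \<in> {3..n}" using t'r[OF xy1(1)] by auto
          hence tx: "\<tau> x = \<rho> (\<tau>' (x - 1) + 1)" "\<rho> (\<tau>' (x - 1) + 1) \<in> {3..n}" using False nx r3 unfolding \<tau>_def by auto
          have ny: "\<tau>' (y - 1) \<noteq> 1"
          proof
            assume "\<tau>' (y - 1) = 1"
            hence "\<tau> y = 1" using False unfolding \<tau>_def by simp
            thus False using tx xy(3) by auto
          qed
          hence ry: "\<tau>' (y - 1) + 1 \<in> {3..n}" using t'r[OF xy1(2)] by auto
          have "\<tau> y = \<rho> (\<tau>' (y - 1) + 1)" using False ny unfolding \<tau>_def by auto
          hence "\<rho> (\<tau>' (x - 1) + 1) = \<rho> (\<tau>' (y - 1) + 1)" using tx xy(3) by simp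
          hence "\<tau>' (x - 1) + 1 = \<tau>' (y - 1) + 1" using rx ry \<rho>(1) by (metis inj_onD)
          hence "x - 1 = y - 1" using xy1 t'inj by (auto dest: inj_onD)
          thus ?thesis using False xy by auto
        qed
      qed
    qed
    show "\<exists>\<tau>. Wfin n k \<tau> (apply_circ (P @ SW 1 2 @ shift 2 W') l0)"
      unfolding Wfin_def lFe
    proof (intro exI conjI)
      show "inj_on \<tau> {1..n}" by (rule injt)
      show "\<tau> ` {1..n} = {1..n}" by (rule endo_image) (use injt rngt in auto)
      show "\<tau> (n - k + 1) = 1" using t'1 n unfolding \<tau>_def n_def by simp
      show "\<forall>q\<in>{1..n}. lF q = (if q \<le> n - k + 2 \<and> q \<noteq> n - k + 1 then {1, \<tau> q} else {\<tau> q})"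
      proof
        fix q assume q: "q \<in> {1..n}"
        show "lF q = (if q \<le> n - k + 2 \<and> q \<noteq> n - k + 1 then {1, \<tau> q} else {\<tau> q})"
        proof (cases "q = 1")
          case True
          have "1 \<le> n - k + 2 \<and> 1 \<noteq> n - k + 1" unfolding n_def by simp
          thus ?thesis using True lF1 unfolding \<tau>_def by simp
        next
          case False
          define j where "j = q - 1"
          have j: "j \<in> {1..n-1}" "q = j + 1" using q False unfolding j_def by auto
          have lq: "lF q = lsum (\<lambda>i. lS (i + 1)) (apply_circ W' l0 j)" using lFq[of q] q False unfolding j_def by auto
          have cond: "(q \<le> n - k + 2 \<and> q \<noteq> n - k + 1) \<longleftrightarrow> (j \<le> n - 1 - k + 2 \<and> j \<noteq> n - 1 - k + 1)"
            using j n unfolding n_def by auto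
          show ?thesis
          proof (cases "j \<le> n - 1 - k + 2 \<and> j \<noteq> n - 1 - k + 1")
            case True
            have "j \<noteq> n - k" using True n unfolding n_def by auto
            hence tj: "\<tau>' j \<noteq> 1" using t'ne j(1) by blast
            hence r: "\<tau>' j + 1 \<in> {3..n}" using t'r[OF j(1)] by auto
            have "apply_circ W' l0 j = {1, \<tau>' j}" using t'f j(1) True by auto
            hence "lF q = lsum (\<lambda>i. lS (i + 1)) (insert 1 {\<tau>' j})" using lq by simp
            also have "\<dots> = labmul (lS 2) (lS (\<tau>' j + 1))" using tj by (subst lsum_insert) (simp_all add: numeral_2_eq_2)
            also have "\<dots> = labmul {1} {\<rho> (\<tau>' j + 1)}" using lS2 lS3[OF r] by simp
            also have "\<dots> = {1, \<rho> (\<tau>' j + 1)}" using r3[OF r] unfolding labmul_def by auto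
            also have "\<rho> (\<tau>' j + 1) = \<tau> q" unfolding \<tau>_def using False tj j by simp
            finally show ?thesis using cond True by simp
          next
            case nE: False
            have "apply_circ W' l0 j = {\<tau>' j}" using t'f j(1) nE by auto
            hence lq': "lF q = lS (\<tau>' j + 1)" using lq by simp
            have "lS (\<tau>' j + 1) = {\<tau> q}"
            proof (cases "\<tau>' j = 1")
              case True thus ?thesis using lS2 False j unfolding \<tau>_def by (simp add: numeral_2_eq_2)
            next
              case f2: False
              hence r: "\<tau>' j + 1 \<in> {3..n}" using t'r[OF j(1)] by auto
              thus ?thesis using lS3[OF r] f2 False j unfolding \<tau>_def by simp
            qed
            moreover have nc: "\<not> (q \<le> n - k + 2 \<and> q \<noteq> n - k + 1)" using cond nE by blast
            ultimately show ?thesis unfolding if_not_P[OF nc] using lq' by simp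
          qed
        qed
      qed
    qed
  qed
qed




definition RPc :: "nat \<Rightarrow> circuit" where
  "RPc m = concat (map (\<lambda>i. DX (m + 1 - i) (m - i)) [1..<m])"

lemma map_gates_concat: "map_gates f (concat Xs) = concat (map (map_gates f) Xs)"
  by (induction Xs) simp_all

lemma map_gates_DX: "map_gates f (DX a b) = DX (f a) (f b)"
  by (simp add: DX_def CX_def map_gates_def)

lemma map_gates_id: "map_gates (\<lambda>i. i + 1 - 1) C = C"
  by (simp add: map_gates_def)

lemma refl_PTC: "refl 1 m (PTC m) = RPc m"
proof -
  have "refl 1 m (PTC m) = map_gates (\<lambda>i. 1 + m - i) (PTC m)"
    unfolding refl_def shift_def map_gates_id ..
  also have "\<dots> = concat (map (\<lambda>i. DX (1 + m - i) (1 + m - (i + 1))) [1..<m])"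
    unfolding PTC_def map_gates_concat map_map comp_def map_gates_DX ..
  also have "\<dots> = RPc m" unfolding RPc_def by (intro arg_cong[where f=concat] map_cong) auto
  finally show ?thesis .
qed

lemma RP_step: "m \<ge> 1 \<Longrightarrow> RPc (Suc m) = DX (m + 1) m @ RPc m"
proof -
  assume m: "m \<ge> 1"
  have "[1..<Suc m] = 1 # [Suc 1..<Suc m]" using m by (simp add: upt_conv_Cons)
  also have "[Suc 1..<Suc m] = map Suc [1..<m]" by (simp add: map_Suc_upt)
  finally have e: "[1..<Suc m] = 1 # map Suc [1..<m]" .
  show ?thesis unfolding RPc_def e by (simp add: comp_def)
qed

lemma RP1: "RPc (Suc 0) = []" by (simp add: RPc_def)

lemma apply_DX: "apply_circ (DX c t) l = (let l' = l(c := labmul (l t) (l c)) in l'(t := labmul (l' c) (l' t)))"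
  by (simp add: DX_def Let_def)

lemma RP_eff:
  "m \<ge> 1 \<Longrightarrow> l m = e \<Longrightarrow> (\<forall>j. 1 \<le> j \<and> j < m \<longrightarrow> l j = labmul e (b j)) \<Longrightarrow>
   apply_circ (RPc m) l 1 = e \<and> (\<forall>j. 1 \<le> j \<and> j < m \<longrightarrow> apply_circ (RPc m) l (j + 1) = b j) \<and>
   (\<forall>q. q > m \<longrightarrow> apply_circ (RPc m) l q = l q)"
proof (induction m arbitrary: l)
  case 0 thus ?case by simp
next
  case (Suc m)
  show ?case
  proof (cases "m = 0")
    case True thus ?thesis using Suc.prems by (simp add: RP1)
  next
    case False
    hence m: "m \<ge> 1" by simp
    define l' where "l' = l(m + 1 := labmul (l m) (l (m + 1)))"
    define l'' where "l'' = l'(m := labmul (l' (m + 1)) (l' m))"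
    have lm: "l m = labmul e (b m)" using Suc.prems m by simp
    have lm1: "l (m + 1) = e" using Suc.prems by simp
    have l'm1: "l' (m + 1) = b m" unfolding l'_def using lm lm1 by (simp add: labmul_simps)
    have l''m: "l'' m = e" unfolding l''_def using l'm1 lm by (simp add: l'_def labmul_simps)
    have l''j: "l'' j = l j" if "j < m" for j unfolding l''_def l'_def using that by simp
    have l''m1: "l'' (m + 1) = b m" unfolding l''_def using l'm1 by simp
    have l''q: "l'' q = l q" if "q > m + 1" for q unfolding l''_def l'_def using that by simp
    have app: "apply_circ (DX (m + 1) m) l = l''"
      unfolding apply_DX l''_def l'_def Let_def by simp
    have IH: "apply_circ (RPc m) l'' 1 = e \<and> (\<forall>j. 1 \<le> j \<and> j < m \<longrightarrow> apply_circ (RPc m) l'' (j + 1) = b j) \<and>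
      (\<forall>q. q > m \<longrightarrow> apply_circ (RPc m) l'' q = l'' q)"
      using Suc.IH[of l'', OF m l''m] l''j Suc.prems by simp
    have e: "apply_circ (RPc (Suc m)) l = apply_circ (RPc m) l''" using RP_step[OF m] app by simp
    show ?thesis unfolding e
    proof (intro conjI allI impI)
      show "apply_circ (RPc m) l'' 1 = e" using IH by simp
    next
      fix j assume j: "1 \<le> j \<and> j < Suc m"
      show "apply_circ (RPc m) l'' (j + 1) = b j"
      proof (cases "j = m")
        case True thus ?thesis using IH l''m1 by simp
      next
        case False thus ?thesis using IH j by simp
      qed
    next
      fix q assume q: "Suc m < q"
      thus "apply_circ (RPc m) l'' q = l q" using IH l''q by simp
    qed
  qed
qed

lemma is_circuit_DX: "a \<noteq> b \<Longrightarrow> a \<in> {1..n} \<Longrightarrow> b \<in> {1..n} \<Longrightarrow> is_circuit n (DX a b)"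
  unfolding DX_def by (simp add: is_circuit_CX)

lemma is_circuit_RPc: "m \<le> n \<Longrightarrow> is_circuit n (RPc m)"
  unfolding RPc_def
proof (rule is_circuit_concat, intro ballI)
  fix C assume m: "m \<le> n" and "C \<in> set (map (\<lambda>i. DX (m + 1 - i) (m - i)) [1..<m])"
  then obtain i where i: "i \<in> {1..<m}" "C = DX (m + 1 - i) (m - i)" by auto
  show "is_circuit n C" unfolding i(2) by (rule is_circuit_DX) (use i m in auto)
qed

lemma SS:
  assumes k: "k \<ge> 3" and F: "\<forall>m \<ge> k-1. clean_special (k-1) m (F m)" and n: "n \<ge> k"
  shows "clean_special k n (W F k n @ CX (n - k + 1) (n - k + 2) @ refl 1 (n - k + 1) (PTC (n - k + 1)))"
proof -
  define a where "a = n - k + 1"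
  have a: "a \<ge> 1" "a + 1 \<le> n" "a + 1 = n - k + 2" using n k unfolding a_def by auto
  have We: "W F k n = Wc F k (n - k)" unfolding W_def ..
  have nk: "k + (n - k) = n" using n by simp
  note wl = WL[OF k F, of "n - k"]
  have Wc: "is_circuit n (W F k n)" using wl unfolding We nk by blast
  have Wg: "\<forall>T. T \<subseteq> {2..n} \<longrightarrow> card T = k - 1 \<longrightarrow> insert 1 T \<in> generated n (W F k n) l0"
    using wl unfolding We nk by blast
  obtain \<tau> where \<tau>: "Wfin n k \<tau> (apply_circ (W F k n) l0)" using wl unfolding We nk by blast
  define lW where "lW = apply_circ (W F k n) l0"
  have tinj: "inj_on \<tau> {1..n}" and tim: "\<tau> ` {1..n} = {1..n}" and ta: "\<tau> a = 1"
    and tf: "\<forall>q\<in>{1..n}. lW q = (if q \<le> a + 1 \<and> q \<noteq> a then {1, \<tau> q} else {\<tau> q})"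
    using \<tau> a unfolding Wfin_def lW_def a_def by auto
  have tne: "\<tau> q \<noteq> 1" if "q \<in> {1..n}" "q \<noteq> a" for q
  proof
    assume "\<tau> q = 1"
    hence "\<tau> q = \<tau> a" using ta by simp
    moreover have "a \<in> {1..n}" using a by auto
    ultimately show False using that tinj by (auto dest: inj_onD)
  qed
  have lWa: "lW a = {1}" using tf ta a by auto
  have lWa1: "lW (a + 1) = {1, \<tau> (a + 1)}" using tf a by auto
  have ta1: "\<tau> (a + 1) \<noteq> 1" using tne a by auto
  define lC where "lC = lW(a + 1 := labmul (lW a) (lW (a + 1)))"
  have lCa1: "lC (a + 1) = {\<tau> (a + 1)}" unfolding lC_def lWa lWa1 using ta1 by (auto simp: labmul_def)
  have RPe: "apply_circ (RPc a) lC 1 = {1} \<and> (\<forall>j. 1 \<le> j \<and> j < a \<longrightarrow> apply_circ (RPc a) lC (j + 1) = {\<tau> j}) \<and>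
   (\<forall>q. q > a \<longrightarrow> apply_circ (RPc a) lC q = lC q)"
  proof (rule RP_eff[OF a(1)])
    show "lC a = {1}" unfolding lC_def using lWa by simp
    show "\<forall>j. 1 \<le> j \<and> j < a \<longrightarrow> lC j = labmul {1} {\<tau> j}"
    proof (intro allI impI)
      fix j assume j: "1 \<le> j \<and> j < a"
      hence j1: "j \<in> {1..n}" "j \<noteq> a" "j \<le> a + 1" using a by auto
      hence "lW j = {1, \<tau> j}" using tf by auto
      moreover have "\<tau> j \<noteq> 1" using tne j1 by auto
      ultimately have "lW j = {1, \<tau> j}" "\<tau> j \<noteq> 1" by auto
      thus "lC j = labmul {1} {\<tau> j}" unfolding lC_def using j by (auto simp: labmul_def)
    qed
  qed
  define c where "c q = (if q = 1 then a else if q \<le> a then q - 1 else q)" for q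
  define \<pi> where "\<pi> q = \<tau> (c q)" for q
  have crng: "c ` {1..n} \<subseteq> {1..n}" unfolding c_def using a by auto
  have cinj: "inj_on c {1..n}" unfolding c_def using a by (auto simp: inj_on_def split: if_splits)
  have pinj: "inj_on \<pi> {1..n}"
  proof -
    have "inj_on \<tau> (c ` {1..n})" using inj_on_subset[OF tinj crng] .
    hence "inj_on (\<tau> \<circ> c) {1..n}" using cinj by (intro comp_inj_on)
    thus ?thesis unfolding \<pi>_def comp_def .
  qed
  have prng: "\<pi> ` {1..n} \<subseteq> {1..n}" using crng tim unfolding \<pi>_def by auto
  have fin: "apply_circ (W F k n @ CX a (a + 1) @ RPc a) l0 q = {\<pi> q}" if q: "q \<in> {1..n}" for q
  proof -
    have e: "apply_circ (W F k n @ CX a (a + 1) @ RPc a) l0 = apply_circ (RPc a) lC"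
      unfolding lC_def lW_def by simp
    consider "q = 1" | "2 \<le> q \<and> q \<le> a" | "q = a + 1" | "q > a + 1" using q by force
    thus ?thesis
    proof cases
      case 1 thus ?thesis unfolding e using RPe ta unfolding \<pi>_def c_def by simp
    next
      case 2
      hence "1 \<le> q - 1 \<and> q - 1 < a" by auto
      hence "apply_circ (RPc a) lC ((q - 1) + 1) = {\<tau> (q - 1)}" using RPe by blast
      moreover have "(q - 1) + 1 = q" using 2 by auto
      ultimately have "apply_circ (RPc a) lC q = {\<tau> (q - 1)}" by simp
      thus ?thesis unfolding e \<pi>_def c_def using 2 by simp
    next
      case 3 thus ?thesis unfolding e using RPe lCa1 a unfolding \<pi>_def c_def by simp
    next
      case 4
      hence "apply_circ (RPc a) lC q = lW q" using RPe unfolding lC_def by simp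
      also have "\<dots> = {\<tau> q}" using tf q 4 by auto
      finally show ?thesis unfolding e \<pi>_def c_def using 4 by simp
    qed
  qed
  have ee: "W F k n @ CX (n - k + 1) (n - k + 2) @ refl 1 (n - k + 1) (PTC (n - k + 1)) = W F k n @ CX a (a + 1) @ RPc a"
    unfolding refl_PTC a_def using a a_def by simp
  show ?thesis unfolding ee clean_special_def
  proof (intro conjI allI impI)
    show "is_circuit n (W F k n @ CX a (a + 1) @ RPc a)"
      using Wc is_circuit_CX[of a "a + 1" n] is_circuit_RPc[of a n] a by simp
    show "k \<le> n" by fact
  next
    fix T assume "T \<subseteq> {2..n} \<and> card T = k - 1"
    thus "insert 1 T \<in> generated n (W F k n @ CX a (a + 1) @ RPc a) l0"
      using Wg by (intro generated_subset_mono) blast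
  next
    show "\<exists>\<pi>. bij_betw \<pi> {1..n} {1..n} \<and> \<pi> 1 = 1 \<and> (\<forall>q\<in>{1..n}. apply_circ (W F k n @ CX a (a + 1) @ RPc a) l0 q = {\<pi> q})"
    proof (intro exI conjI)
      show "bij_betw \<pi> {1..n} {1..n}" unfolding bij_betw_def using pinj endo_image[OF _ pinj prng] by simp
      show "\<pi> 1 = 1" unfolding \<pi>_def c_def using ta by simp
      show "\<forall>q\<in>{1..n}. apply_circ (W F k n @ CX a (a + 1) @ RPc a) l0 q = {\<pi> q}" using fin by blast
    qed
  qed
qed

theorem part2_clean:
  assumes k0: "k0 \<ge> 2" and G0: "\<forall>n \<ge> k0. clean_special k0 n (G0 n)"
  shows "\<forall>n \<ge> k0 + d. clean_special (k0 + d) n (special_gen G0 k0 d n)"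
proof (induction d)
  case 0 thus ?case using G0 by simp
next
  case (Suc d)
  have k: "k0 + Suc d \<ge> 3" using k0 by simp
  have F: "\<forall>m \<ge> k0 + Suc d - 1. clean_special (k0 + Suc d - 1) m (special_gen G0 k0 d m)" using Suc.IH by simp
  show ?case
  proof (intro allI impI)
    fix n assume n: "k0 + Suc d \<le> n"
    show "clean_special (k0 + Suc d) n (special_gen G0 k0 (Suc d) n)"
      using SS[OF k F n] by (simp add: Let_def)
  qed
qed




section \<open>Asymptotics\<close>

definition bnd :: "(nat \<Rightarrow> real) \<Rightarrow> nat \<Rightarrow> bool" where
  "bnd f a \<longleftrightarrow> (\<exists>C N. \<forall>n\<ge>N. \<bar>f n\<bar> \<le> C * real n ^ a)"

lemma bnd_bigo: "bnd f a \<Longrightarrow> f \<in> O(\<lambda>n. real n powr real a)"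
proof -
  assume "bnd f a"
  then obtain C N where CN: "\<forall>n\<ge>N. \<bar>f n\<bar> \<le> C * real n ^ a" unfolding bnd_def by blast
  have "eventually (\<lambda>n. norm (f n) \<le> (max C 1) * norm (real n powr real a)) at_top"
    unfolding eventually_at_top_linorder
  proof (intro exI allI impI)
    fix n assume n: "n \<ge> max N 1"
    hence "real n > 0" by simp
    hence e: "norm (real n powr real a) = real n ^ a" by (simp add: powr_realpow)
    have "\<bar>f n\<bar> \<le> C * real n ^ a" using CN n by simp
    also have "\<dots> \<le> max C 1 * real n ^ a" by (intro mult_right_mono) auto
    finally show "norm (f n) \<le> max C 1 * norm (real n powr real a)" unfolding e by simp
  qed
  thus ?thesis unfolding bigo_def by (intro CollectI exI[of _ "max C 1"]) auto
qed

lemma bigo_bnd: "f \<in> O(\<lambda>n. real n powr real a) \<Longrightarrow> bnd f a"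
proof -
  assume "f \<in> O(\<lambda>n. real n powr real a)"
  then obtain c where c: "c > 0" "eventually (\<lambda>n. norm (f n) \<le> c * norm (real n powr real a)) at_top"
    unfolding bigo_def by blast
  then obtain N where N: "\<forall>n\<ge>N. norm (f n) \<le> c * norm (real n powr real a)"
    unfolding eventually_at_top_linorder by blast
  have "\<forall>n\<ge>max N 1. \<bar>f n\<bar> \<le> c * real n ^ a"
  proof (intro allI impI)
    fix n assume n: "n \<ge> max N 1"
    hence "real n > 0" by simp
    hence e: "norm (real n powr real a) = real n ^ a" by (simp add: powr_realpow)
    have "norm (f n) \<le> c * norm (real n powr real a)" using N n by simp
    thus "\<bar>f n\<bar> \<le> c * real n ^ a" using e by simp
  qed
  thus ?thesis unfolding bnd_def by blast
qed

lemma bnd_cong: "bnd f a \<Longrightarrow> (\<forall>n\<ge>N. g n = f n) \<Longrightarrow> bnd g a"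
proof -
  assume "bnd f a" "\<forall>n\<ge>N. g n = f n"
  then obtain C M where "\<forall>n\<ge>M. \<bar>f n\<bar> \<le> C * real n ^ a" unfolding bnd_def by blast
  hence "\<forall>n\<ge>max M N. \<bar>g n\<bar> \<le> C * real n ^ a" using \<open>\<forall>n\<ge>N. g n = f n\<close> by simp
  thus ?thesis unfolding bnd_def by blast
qed

lemma bnd_add: "bnd f a \<Longrightarrow> bnd g a \<Longrightarrow> bnd (\<lambda>n. f n + g n) a"
proof -
  assume "bnd f a" "bnd g a"
  then obtain C1 N1 C2 N2 where 1: "\<forall>n\<ge>N1. \<bar>f n\<bar> \<le> C1 * real n ^ a" and 2: "\<forall>n\<ge>N2. \<bar>g n\<bar> \<le> C2 * real n ^ a"
    unfolding bnd_def by blast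
  have "\<forall>n\<ge>max N1 N2. \<bar>f n + g n\<bar> \<le> (C1 + C2) * real n ^ a"
  proof (intro allI impI)
    fix n assume "n \<ge> max N1 N2"
    hence "\<bar>f n\<bar> \<le> C1 * real n ^ a" "\<bar>g n\<bar> \<le> C2 * real n ^ a" using 1 2 by auto
    thus "\<bar>f n + g n\<bar> \<le> (C1 + C2) * real n ^ a" by (simp add: distrib_right abs_triangle_ineq order_trans[OF abs_triangle_ineq])
  qed
  thus ?thesis unfolding bnd_def by blast
qed

lemma bnd_mono: "bnd f a \<Longrightarrow> a \<le> b \<Longrightarrow> bnd f b"
proof -
  assume "bnd f a" "a \<le> b"
  then obtain C N where 1: "\<forall>n\<ge>N. \<bar>f n\<bar> \<le> C * real n ^ a" unfolding bnd_def by blast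
  have "\<forall>n\<ge>max N 1. \<bar>f n\<bar> \<le> max C 0 * real n ^ b"
  proof (intro allI impI)
    fix n assume n: "n \<ge> max N 1"
    have "\<bar>f n\<bar> \<le> C * real n ^ a" using 1 n by auto
    also have "\<dots> \<le> max C 0 * real n ^ a" by (intro mult_right_mono) auto
    also have "\<dots> \<le> max C 0 * real n ^ b"
      using n \<open>a \<le> b\<close> by (intro mult_left_mono power_increasing) auto
    finally show "\<bar>f n\<bar> \<le> max C 0 * real n ^ b" .
  qed
  thus ?thesis unfolding bnd_def by blast
qed

lemma bnd_const: "bnd (\<lambda>n. c) a"
proof -
  have "\<forall>n\<ge>1. \<bar>c\<bar> \<le> \<bar>c\<bar> * real n ^ a"
  proof (intro allI impI)
    fix n :: nat assume "n \<ge> 1"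
    hence "1 \<le> real n ^ a" by simp
    thus "\<bar>c\<bar> \<le> \<bar>c\<bar> * real n ^ a" using mult_left_mono[of 1 "real n ^ a" "\<bar>c\<bar>"] by simp
  qed
  thus ?thesis unfolding bnd_def by blast
qed

lemma bnd_monom: "bnd (\<lambda>n. c * real n ^ a) a"
  unfolding bnd_def by (intro exI[of _ "\<bar>c\<bar>"] exI[of _ 0]) (simp add: abs_mult)

lemma bnd_linear: "a \<ge> 1 \<Longrightarrow> bnd (\<lambda>n. c + d * real n) a"
proof -
  assume a: "a \<ge> 1"
  have "bnd (\<lambda>n. d * real n ^ 1) 1" by (rule bnd_monom)
  hence "bnd (\<lambda>n. d * real n) a" using bnd_mono a by simp
  thus ?thesis using bnd_add[OF bnd_const] by blast
qed

lemma bnd_neg: "bnd f a \<Longrightarrow> bnd (\<lambda>n. - f n) a" unfolding bnd_def by simp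

lemma bnd_diff: "bnd f a \<Longrightarrow> bnd g a \<Longrightarrow> bnd (\<lambda>n. f n - g n) a"
  using bnd_add[OF _ bnd_neg] by simp

lemma pow_low: "(x::real) \<ge> 0 \<Longrightarrow> x ^ (a + 1) + real (a + 1) * x ^ a \<le> (x + 1) ^ (a + 1)"
proof (induction a)
  case 0 thus ?case by simp
next
  case (Suc a)
  have "x ^ (Suc a + 1) + real (Suc a + 1) * x ^ Suc a
      \<le> x ^ (Suc a + 1) + x ^ (a + 1) + real (a + 1) * x ^ (a + 1) + real (a + 1) * x ^ a"
    using Suc.prems by (simp add: algebra_simps)
  also have "\<dots> = (x + 1) * (x ^ (a + 1) + real (a + 1) * x ^ a)" by (simp add: algebra_simps)
  also have "\<dots> \<le> (x + 1) * (x + 1) ^ (a + 1)" using Suc by (intro mult_left_mono) auto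
  also have "\<dots> = (x + 1) ^ (Suc a + 1)" by simp
  finally show ?case .
qed

lemma pow_up: "(x::real) \<ge> 0 \<Longrightarrow> (x + 1) ^ (a + 1) \<le> x ^ (a + 1) + real (a + 1) * (x + 1) ^ a"
proof (induction a)
  case 0 thus ?case by simp
next
  case (Suc a)
  have "(x + 1) ^ (Suc a + 1) = (x + 1) * (x + 1) ^ (a + 1)" by simp
  also have "\<dots> \<le> (x + 1) * (x ^ (a + 1) + real (a + 1) * (x + 1) ^ a)" using Suc by (intro mult_left_mono) auto
  also have "\<dots> = x ^ (Suc a + 1) + x ^ (a + 1) + real (a + 1) * (x + 1) ^ (a + 1)" by (simp add: algebra_simps)
  also have "x ^ (a + 1) \<le> (x + 1) ^ (a + 1)" using Suc.prems by (intro power_mono) auto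
  hence "x ^ (Suc a + 1) + x ^ (a + 1) + real (a + 1) * (x + 1) ^ (a + 1) \<le> x ^ (Suc a + 1) + real (Suc a + 1) * (x + 1) ^ Suc a"
    by (simp add: algebra_simps)
  finally show ?case .
qed

lemma psum_low: "real (a + 1) * (\<Sum>m<n. real m ^ a) \<le> real n ^ (a + 1)"
proof (induction n)
  case 0 thus ?case by simp
next
  case (Suc n)
  have "real (a + 1) * (\<Sum>m<Suc n. real m ^ a) = real (a + 1) * (\<Sum>m<n. real m ^ a) + real (a + 1) * real n ^ a"
    by (simp add: algebra_simps)
  also have "\<dots> \<le> real n ^ (a + 1) + real (a + 1) * real n ^ a" using Suc by simp
  also have "\<dots> \<le> (real n + 1) ^ (a + 1)" by (rule pow_low) simp
  also have "\<dots> = real (Suc n) ^ (a + 1)" by (simp only: of_nat_Suc add.commute)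
  finally show ?case .
qed

lemma psum_up: "real n ^ (a + 1) \<le> real (a + 1) * ((\<Sum>m<n. real m ^ a) + real n ^ a)"
proof (induction n)
  case 0 thus ?case by (simp add: power_0_left)
next
  case (Suc n)
  have "real (Suc n) ^ (a + 1) = (real n + 1) ^ (a + 1)" by (simp only: of_nat_Suc add.commute)
  also have "\<dots> \<le> real n ^ (a + 1) + real (a + 1) * (real n + 1) ^ a" by (rule pow_up) simp
  also have "\<dots> \<le> real (a + 1) * ((\<Sum>m<n. real m ^ a) + real n ^ a) + real (a + 1) * (real n + 1) ^ a"
    using Suc by simp
  also have "\<dots> = real (a + 1) * ((\<Sum>m<Suc n. real m ^ a) + real (Suc n) ^ a)" by (simp add: algebra_simps)
  finally show ?case .
qed

lemma psum_err: "\<bar>(\<Sum>m<n. real m ^ a) - real n ^ (a + 1) / real (a + 1)\<bar> \<le> real n ^ a"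
proof -
  have p: "real (a + 1) > 0" by simp
  have "(\<Sum>m<n. real m ^ a) \<le> real n ^ (a + 1) / real (a + 1)"
    using psum_low[of a n] p by (simp add: field_simps)
  moreover have "real n ^ (a + 1) / real (a + 1) \<le> (\<Sum>m<n. real m ^ a) + real n ^ a"
    using psum_up[of n a] p by (simp add: field_simps)
  ultimately show ?thesis by linarith
qed

lemma bnd_psum: "bnd (\<lambda>n. (\<Sum>m<n. real m ^ a) - real n ^ (a + 1) / real (a + 1)) a"
  unfolding bnd_def using psum_err by (intro exI[of _ 1] exI[of _ 0]) simp

lemma sum_bnd_err:
  assumes a: "a \<ge> 1" and e: "bnd e (a - 1)"
  shows "bnd (\<lambda>n. \<Sum>m\<in>{K..<n}. e m) a"
proof -
  obtain C N where CN: "\<forall>n\<ge>N. \<bar>e n\<bar> \<le> C * real n ^ (a - 1)" using e unfolding bnd_def by blast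
  define E0 where "E0 = (\<Sum>m<N. \<bar>e m\<bar>)"
  have "\<forall>n\<ge>1. \<bar>\<Sum>m\<in>{K..<n}. e m\<bar> \<le> (E0 + max C 0) * real n ^ a"
  proof (intro allI impI)
    fix n :: nat assume n: "n \<ge> 1"
    have "\<bar>\<Sum>m\<in>{K..<n}. e m\<bar> \<le> (\<Sum>m\<in>{K..<n}. \<bar>e m\<bar>)" by (rule sum_abs)
    also have "\<dots> \<le> (\<Sum>m<n. \<bar>e m\<bar>)" by (intro sum_mono2) auto
    also have "\<dots> \<le> (\<Sum>m<N. \<bar>e m\<bar>) + (\<Sum>m\<in>{N..<n}. \<bar>e m\<bar>)"
    proof -
      have "{..<n} \<subseteq> {..<N} \<union> {N..<n}" by auto
      hence "(\<Sum>m<n. \<bar>e m\<bar>) \<le> (\<Sum>m\<in>{..<N} \<union> {N..<n}. \<bar>e m\<bar>)" by (intro sum_mono2) auto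
      also have "\<dots> = (\<Sum>m<N. \<bar>e m\<bar>) + (\<Sum>m\<in>{N..<n}. \<bar>e m\<bar>)" by (intro sum.union_disjoint) auto
      finally show ?thesis .
    qed
    also have "(\<Sum>m\<in>{N..<n}. \<bar>e m\<bar>) \<le> (\<Sum>m\<in>{N..<n}. max C 0 * real n ^ (a - 1))"
    proof (intro sum_mono)
      fix m assume m: "m \<in> {N..<n}"
      have "\<bar>e m\<bar> \<le> C * real m ^ (a - 1)" using CN m by auto
      also have "\<dots> \<le> max C 0 * real m ^ (a - 1)" by (intro mult_right_mono) auto
      also have "\<dots> \<le> max C 0 * real n ^ (a - 1)" using m by (intro mult_left_mono power_mono) auto
      finally show "\<bar>e m\<bar> \<le> max C 0 * real n ^ (a - 1)" .
    qed
    also have "\<dots> \<le> real n * (max C 0 * real n ^ (a - 1))" by (simp add: mult_right_mono)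
    also have "\<dots> = max C 0 * real n ^ a"
    proof -
      have "real n * real n ^ (a - 1) = real n ^ a" using a by (metis Suc_diff_le diff_Suc_1 power_Suc)
      thus ?thesis by (simp add: algebra_simps)
    qed
    finally have "\<bar>\<Sum>m\<in>{K..<n}. e m\<bar> \<le> E0 + max C 0 * real n ^ a" unfolding E0_def by simp
    also have "E0 \<le> E0 * real n ^ a"
    proof -
      have "E0 \<ge> 0" unfolding E0_def by (intro sum_nonneg) auto
      moreover have "1 \<le> real n ^ a" using n by simp
      ultimately show ?thesis using mult_left_mono[of 1 "real n ^ a" E0] by simp
    qed
    finally show "\<bar>\<Sum>m\<in>{K..<n}. e m\<bar> \<le> (E0 + max C 0) * real n ^ a" by (simp add: algebra_simps)
  qed
  thus ?thesis unfolding bnd_def by blast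
qed

lemma sum_lemma:
  assumes a: "a \<ge> 1" and f: "bnd (\<lambda>m. f m - c * real m ^ a) (a - 1)"
  shows "bnd (\<lambda>n. (\<Sum>m\<in>{K..<n}. f m) - c / real (a + 1) * real n ^ (a + 1)) a"
proof -
  define e where "e m = f m - c * real m ^ a" for m
  have s1: "bnd (\<lambda>n. \<Sum>m\<in>{K..<n}. e m) a" using sum_bnd_err[OF a] f unfolding e_def by blast
  have s2: "bnd (\<lambda>n. c * ((\<Sum>m<n. real m ^ a) - real n ^ (a + 1) / real (a + 1))) a"
  proof -
    obtain C N where "\<forall>n\<ge>N. \<bar>(\<Sum>m<n. real m ^ a) - real n ^ (a + 1) / real (a + 1)\<bar> \<le> C * real n ^ a"
      using bnd_psum[of a] unfolding bnd_def by blast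
    hence "\<forall>n\<ge>N. \<bar>c * ((\<Sum>m<n. real m ^ a) - real n ^ (a + 1) / real (a + 1))\<bar> \<le> (\<bar>c\<bar> * C) * real n ^ a"
      by (simp add: abs_mult mult.assoc mult_left_mono)
    thus ?thesis unfolding bnd_def by blast
  qed
  have s3: "bnd (\<lambda>n. - c * (\<Sum>m<K. real m ^ a)) a" by (rule bnd_const)
  have "bnd (\<lambda>n. (\<Sum>m\<in>{K..<n}. e m) + c * ((\<Sum>m<n. real m ^ a) - real n ^ (a + 1) / real (a + 1)) + - c * (\<Sum>m<K. real m ^ a)) a"
    by (intro bnd_add s1 s2 s3)
  moreover have "\<forall>n\<ge>K. (\<Sum>m\<in>{K..<n}. f m) - c / real (a + 1) * real n ^ (a + 1) =
     (\<Sum>m\<in>{K..<n}. e m) + c * ((\<Sum>m<n. real m ^ a) - real n ^ (a + 1) / real (a + 1)) + - c * (\<Sum>m<K. real m ^ a)"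
  proof (intro allI impI)
    fix n assume n: "n \<ge> K"
    have sp: "(\<Sum>m<n. real m ^ a) = (\<Sum>m<K. real m ^ a) + (\<Sum>m\<in>{K..<n}. real m ^ a)"
    proof -
      have "{..<n} = {..<K} \<union> {K..<n}" using n by auto
      moreover have "(\<Sum>m\<in>{..<K} \<union> {K..<n}. real m ^ a) = (\<Sum>m<K. real m ^ a) + (\<Sum>m\<in>{K..<n}. real m ^ a)"
        by (rule sum.union_disjoint) auto
      ultimately show ?thesis by simp
    qed
    have "(\<Sum>m\<in>{K..<n}. f m) = (\<Sum>m\<in>{K..<n}. e m) + c * (\<Sum>m\<in>{K..<n}. real m ^ a)"
      unfolding e_def by (simp add: sum.distrib sum_distrib_left sum_subtractf)
    thus "(\<Sum>m\<in>{K..<n}. f m) - c / real (a + 1) * real n ^ (a + 1) =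
     (\<Sum>m\<in>{K..<n}. e m) + c * ((\<Sum>m<n. real m ^ a) - real n ^ (a + 1) / real (a + 1)) + - c * (\<Sum>m<K. real m ^ a)"
      unfolding sp by (simp add: algebra_simps)
  qed
  ultimately show ?thesis by (rule bnd_cong)
qed




section \<open>Size and depth recurrences\<close>

definition good_meas :: "(circuit \<Rightarrow> nat) \<Rightarrow> bool" where
  "good_meas \<mu> \<longleftrightarrow> (\<forall>A B. \<mu> (A @ B) = \<mu> A + \<mu> B) \<and> (\<forall>p C. p \<ge> 1 \<longrightarrow> \<mu> (shift p C) = \<mu> C) \<and>
     (\<forall>i j. \<mu> (CX i j) = 1) \<and> \<mu> [] = 0"

lemma card_gm: "inj f \<Longrightarrow> card (gm f M) = card M"
proof -
  assume f: "inj f"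
  have "inj_on (\<lambda>(i, j). (f i, f j)) M" using f by (auto simp: inj_on_def dest: injD)
  thus ?thesis unfolding gm_def by (rule card_image)
qed

lemma good_csize: "good_meas csize"
  unfolding good_meas_def
proof (intro conjI allI impI)
  fix A B show "csize (A @ B) = csize A + csize B" by (simp add: csize_def)
next
  fix p C assume p: "1 \<le> (p::nat)"
  show "csize (shift p C) = csize C"
    unfolding shift_def csize_def map_gates_def
    using card_gm[OF inj_shift[OF p]] by (simp add: comp_def gm_def)
next
  fix i j show "csize (CX i j) = 1" by (simp add: csize_def CX_def)
next
  show "csize [] = 0" by (simp add: csize_def)
qed

lemma good_depth: "good_meas depth"
  unfolding good_meas_def depth_def shift_def by (simp add: CX_def)

lemma gm_app: "good_meas \<mu> \<Longrightarrow> \<mu> (A @ B) = \<mu> A + \<mu> B" unfolding good_meas_def by blast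
lemma gm_shift: "good_meas \<mu> \<Longrightarrow> p \<ge> 1 \<Longrightarrow> \<mu> (shift p C) = \<mu> C" unfolding good_meas_def by blast
lemma gm_CX: "good_meas \<mu> \<Longrightarrow> \<mu> (CX i j) = 1" unfolding good_meas_def by blast
lemma gm_Nil: "good_meas \<mu> \<Longrightarrow> \<mu> [] = 0" unfolding good_meas_def by blast

lemma gm_concat: "good_meas \<mu> \<Longrightarrow> \<mu> (concat Xs) = sum_list (map \<mu> Xs)"
  by (induction Xs) (simp_all add: gm_app gm_Nil)

lemma gm_SW: "good_meas \<mu> \<Longrightarrow> \<mu> (SW a b) = 3" by (simp add: SW_def gm_app gm_CX)
lemma gm_DX: "good_meas \<mu> \<Longrightarrow> \<mu> (DX a b) = 2" by (simp add: DX_def gm_app gm_CX)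

lemma gm_RPc: "good_meas \<mu> \<Longrightarrow> \<mu> (RPc m) = 2 * (m - 1)"
proof -
  assume g: "good_meas \<mu>"
  have "\<mu> (RPc m) = sum_list (map (\<lambda>i. 2) [1..<m])"
    unfolding RPc_def gm_concat[OF g] map_map comp_def gm_DX[OF g] ..
  also have "\<dots> = 2 * (m - 1)" by (simp add: sum_list_replicate map_replicate_const)
  finally show ?thesis .
qed

lemma gm_Wc:
  fixes j :: nat
  assumes g: "good_meas \<mu>" and k: "k \<ge> 1"
  shows "\<mu> (Wc F k j) = 1 + 4 * j + (\<Sum>i\<le>j. \<mu> (F (k - 1 + i)))"
proof (induction j)
  case 0 thus ?case by (simp add: gm_app[OF g] gm_CX[OF g] gm_shift[OF g])
next
  case (Suc j)
  have "k + Suc j - 1 = k - 1 + Suc j" using k by simp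
  thus ?case using Suc by (simp add: gm_app[OF g] gm_CX[OF g] gm_shift[OF g] gm_SW[OF g])
qed

lemma sum_shift_ivl: "(\<Sum>i\<le>(j::nat). g (c + i)) = (\<Sum>m\<in>{c..<c + j + 1}. g m)"
proof (induction j)
  case 0 thus ?case by simp
next
  case (Suc j)
  have "(\<Sum>m\<in>{c..<c + Suc j + 1}. g m) = (\<Sum>m\<in>{c..<c + j + 1}. g m) + g (c + Suc j)"
  proof -
    have "c + Suc j + 1 = Suc (c + j + 1)" by simp
    moreover have "c \<le> c + j + 1" by simp
    ultimately show ?thesis using sum.atLeastLessThan_Suc[of c "c + j + 1" g] by simp
  qed
  thus ?case using Suc by simp
qed

lemma gm_special:
  assumes g: "good_meas \<mu>" and k0: "k0 \<ge> 2" and n: "n \<ge> k0 + Suc d"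
  shows "\<mu> (special_gen G0 k0 (Suc d) n) = 2 + 6 * (n - (k0 + Suc d)) +
           (\<Sum>m\<in>{k0 + d..<n}. \<mu> (special_gen G0 k0 d m))"
proof -
  define k where "k = k0 + Suc d"
  have k: "k \<ge> 3" "n \<ge> k" using k0 n unfolding k_def by auto
  have e0: "special_gen G0 k0 (Suc d) n = W (special_gen G0 k0 d) k n @ CX (n - k + 1) (n - k + 2) @ refl 1 (n - k + 1) (PTC (n - k + 1))"
    by (simp add: Let_def k_def)
  have e: "special_gen G0 k0 (Suc d) n = W (special_gen G0 k0 d) k n @ CX (n - k + 1) (n - k + 2) @ RPc (n - k + 1)"
    using e0 unfolding refl_PTC .
  have "\<mu> (special_gen G0 k0 (Suc d) n) = 1 + 4 * (n - k) + (\<Sum>i\<le>n - k. \<mu> (special_gen G0 k0 d (k - 1 + i))) + 1 + 2 * (n - k)"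
    unfolding e W_def using k by (simp add: gm_app[OF g] gm_CX[OF g] gm_RPc[OF g] gm_Wc[OF g])
  also have "(\<Sum>i\<le>n - k. \<mu> (special_gen G0 k0 d (k - 1 + i))) = (\<Sum>m\<in>{k - 1..<k - 1 + (n - k) + 1}. \<mu> (special_gen G0 k0 d m))"
    by (rule sum_shift_ivl)
  also have "k - 1 + (n - k) + 1 = n" using k by simp
  also have "k - 1 = k0 + d" unfolding k_def by simp
  finally show ?thesis unfolding k_def by simp
qed

lemma gm_full:
  assumes g: "good_meas \<mu>" and n: "n \<ge> k" and k: "k \<ge> 1"
  shows "\<mu> (full_gen G k n) = (\<Sum>m\<in>{k..n}. \<mu> (G m))"
proof -
  have "\<mu> (full_gen G k n) = sum_list (map (\<lambda>p. \<mu> (shift p (G (n - p + 1)))) [1..<n - k + 2])"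
    unfolding full_gen_def gm_concat[OF g] map_map comp_def ..
  also have "\<dots> = (\<Sum>p\<in>{1..<n - k + 2}. \<mu> (shift p (G (n - p + 1))))"
    unfolding sum_set_upt_conv_sum_list_nat[symmetric] set_upt ..
  also have "\<dots> = (\<Sum>p\<in>{1..<n - k + 2}. \<mu> (G (n - p + 1)))"
    by (intro sum.cong refl) (simp add: gm_shift[OF g])
  also have "\<dots> = (\<Sum>m\<in>{k..n}. \<mu> (G m))"
    by (rule sum.reindex_bij_witness[where i="\<lambda>m. n + 1 - m" and j="\<lambda>p. n + 1 - p"]) (use n k in \<open>auto simp: Suc_diff_le\<close>)
  finally show ?thesis .
qed

lemma asym_special:
  assumes g: "good_meas \<mu>" and k0: "k0 \<ge> 2" and a0: "a0 \<ge> 1"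
    and base: "bnd (\<lambda>n. real (\<mu> (G0 n)) - c * real n ^ a0) (a0 - 1)"
  shows "bnd (\<lambda>n. real (\<mu> (special_gen G0 k0 d n)) - c * (fact a0 / fact (a0 + d)) * real n ^ (a0 + d)) (a0 + d - 1)"
proof (induction d)
  case 0 thus ?case using base by simp
next
  case (Suc d)
  define a where "a = a0 + d"
  define c' where "c' = c * (fact a0 / fact (a0 + d))"
  have a: "a \<ge> 1" using a0 unfolding a_def by simp
  have IH: "bnd (\<lambda>m. real (\<mu> (special_gen G0 k0 d m)) - c' * real m ^ a) (a - 1)"
    using Suc.IH unfolding a_def c'_def .
  have s: "bnd (\<lambda>n. (\<Sum>m\<in>{k0 + d..<n}. real (\<mu> (special_gen G0 k0 d m))) - c' / real (a + 1) * real n ^ (a + 1)) a"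
    by (rule sum_lemma[OF a IH])
  have l: "bnd (\<lambda>n. (2 - 6 * real (k0 + Suc d)) + 6 * real n) a" by (rule bnd_linear[OF a])
  have "bnd (\<lambda>n. ((2 - 6 * real (k0 + Suc d)) + 6 * real n) + ((\<Sum>m\<in>{k0 + d..<n}. real (\<mu> (special_gen G0 k0 d m))) - c' / real (a + 1) * real n ^ (a + 1))) a"
    by (rule bnd_add[OF l s])
  moreover have "\<forall>n\<ge>k0 + Suc d. real (\<mu> (special_gen G0 k0 (Suc d) n)) - c * (fact a0 / fact (a0 + Suc d)) * real n ^ (a0 + Suc d)
     = ((2 - 6 * real (k0 + Suc d)) + 6 * real n) + ((\<Sum>m\<in>{k0 + d..<n}. real (\<mu> (special_gen G0 k0 d m))) - c' / real (a + 1) * real n ^ (a + 1))"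
  proof (intro allI impI)
    fix n assume n: "n \<ge> k0 + Suc d"
    have r: "real (\<mu> (special_gen G0 k0 (Suc d) n)) = 2 + 6 * (real n - real (k0 + Suc d)) + (\<Sum>m\<in>{k0 + d..<n}. real (\<mu> (special_gen G0 k0 d m)))"
      using gm_special[OF g k0 n] n by (simp add: of_nat_diff)
    have cc: "c * (fact a0 / fact (a0 + Suc d)) = c' / real (a + 1)"
      unfolding c'_def a_def by (simp add: field_simps)
    show "real (\<mu> (special_gen G0 k0 (Suc d) n)) - c * (fact a0 / fact (a0 + Suc d)) * real n ^ (a0 + Suc d)
     = ((2 - 6 * real (k0 + Suc d)) + 6 * real n) + ((\<Sum>m\<in>{k0 + d..<n}. real (\<mu> (special_gen G0 k0 d m))) - c' / real (a + 1) * real n ^ (a + 1))"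
      unfolding r cc a_def by (simp add: algebra_simps)
  qed
  ultimately have "bnd (\<lambda>n. real (\<mu> (special_gen G0 k0 (Suc d) n)) - c * (fact a0 / fact (a0 + Suc d)) * real n ^ (a0 + Suc d)) a"
    by (rule bnd_cong)
  thus ?case unfolding a_def by simp
qed

lemma asym_full:
  assumes g: "good_meas \<mu>" and a: "a \<ge> 1" and k: "k \<ge> 1"
    and f: "bnd (\<lambda>n. real (\<mu> (G n)) - c * real n ^ a) (a - 1)"
  shows "bnd (\<lambda>n. real (\<mu> (full_gen G k n)) - c / real (a + 1) * real n ^ (a + 1)) a"
proof -
  have s: "bnd (\<lambda>n. (\<Sum>m\<in>{k..<n}. real (\<mu> (G m))) - c / real (a + 1) * real n ^ (a + 1)) a"
    by (rule sum_lemma[OF a f])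
  have t: "bnd (\<lambda>n. (real (\<mu> (G n)) - c * real n ^ a) + c * real n ^ a) a"
    by (intro bnd_add bnd_monom bnd_mono[OF f]) simp
  have "bnd (\<lambda>n. ((\<Sum>m\<in>{k..<n}. real (\<mu> (G m))) - c / real (a + 1) * real n ^ (a + 1)) + ((real (\<mu> (G n)) - c * real n ^ a) + c * real n ^ a)) a"
    by (rule bnd_add[OF s t])
  moreover have "\<forall>n\<ge>k. real (\<mu> (full_gen G k n)) - c / real (a + 1) * real n ^ (a + 1) =
     ((\<Sum>m\<in>{k..<n}. real (\<mu> (G m))) - c / real (a + 1) * real n ^ (a + 1)) + ((real (\<mu> (G n)) - c * real n ^ a) + c * real n ^ a)"
  proof (intro allI impI)
    fix n assume n: "n \<ge> k"
    have "real (\<mu> (full_gen G k n)) = (\<Sum>m\<in>{k..n}. real (\<mu> (G m)))" using gm_full[OF g n k] by simp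
    also have "{k..n} = {k..<Suc n}" by auto
    also have "(\<Sum>m\<in>{k..<Suc n}. real (\<mu> (G m))) = (\<Sum>m\<in>{k..<n}. real (\<mu> (G m))) + real (\<mu> (G n))"
      using n by (simp add: sum.atLeastLessThan_Suc)
    finally show "real (\<mu> (full_gen G k n)) - c / real (a + 1) * real n ^ (a + 1) =
     ((\<Sum>m\<in>{k..<n}. real (\<mu> (G m))) - c / real (a + 1) * real n ^ (a + 1)) + ((real (\<mu> (G n)) - c * real n ^ a) + c * real n ^ a)"
      by simp
  qed
  ultimately show ?thesis by (rule bnd_cong)
qed




section \<open>A depth lower bound for 2-body generators\<close>

lemma moment_count:
  assumes C: "is_circuit n C" and M: "M \<in> set C"
  shows "card {q\<in>{1..n}. 1 \<in> apply_moment M l q} \<le> 2 * card {q\<in>{1..n}. 1 \<in> l q}"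
proof -
  define A where "A = {q\<in>{1..n}. 1 \<in> l q}"
  define S where "S = M \<inter> (A \<times> UNIV)"
  have go: "gate_ok n M" and dj: "disj_ok M" and um: "umoment M"
    using C M is_circuit_umoment[OF C M] unfolding is_circuit_alt by auto
  have fA: "finite A" unfolding A_def by simp
  have sub: "{q\<in>{1..n}. 1 \<in> apply_moment M l q} \<subseteq> A \<union> snd ` S"
  proof
    fix q assume q: "q \<in> {q\<in>{1..n}. 1 \<in> apply_moment M l q}"
    show "q \<in> A \<union> snd ` S"
    proof (cases "\<exists>i. (i,q) \<in> M")
      case True
      then obtain i0 where i0: "(i0,q) \<in> M" by blast
      have th: "(THE i. (i,q) \<in> M) = i0" using i0 um unfolding umoment_def by blast
      have "apply_moment M l q = labmul (l i0) (l q)" unfolding apply_moment_def using True th by simp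
      hence "1 \<in> l i0 \<or> 1 \<in> l q" using q unfolding labmul_def by auto
      moreover have "i0 \<in> {1..n}" using go i0 unfolding gate_ok_def by auto
      ultimately show ?thesis
      proof (elim disjE)
        assume "1 \<in> l i0" "i0 \<in> {1..n}"
        hence "(i0, q) \<in> S" unfolding S_def A_def using i0 by auto
        thus ?thesis by force
      next
        assume "1 \<in> l q"
        thus ?thesis using q unfolding A_def by auto
      qed
    next
      case False
      hence "apply_moment M l q = l q" unfolding apply_moment_def by simp
      thus ?thesis using q unfolding A_def by auto
    qed
  qed
  have inj: "inj_on fst S"
  proof (rule inj_onI)
    fix x y assume xy: "x \<in> S" "y \<in> S" "fst x = fst y"
    obtain a b c d where ab: "x = (a,b)" "y = (c,d)" by (cases x, cases y)
    show "x = y"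
    proof (rule ccontr)
      assume "x \<noteq> y"
      hence "a \<noteq> c" using dj xy ab unfolding disj_ok_def S_def by blast
      thus False using xy ab by simp
    qed
  qed
  have fsub: "fst ` S \<subseteq> A" unfolding S_def by auto
  have fS: "finite S" using finite_imageD[OF finite_subset[OF fsub fA] inj] .
  have "card (snd ` S) \<le> card A"
  proof -
    have "card (snd ` S) \<le> card S" using fS by (rule card_image_le)
    also have "\<dots> = card (fst ` S)" using card_image[OF inj] by simp
    also have "\<dots> \<le> card A" using fA fsub by (rule card_mono)
    finally show ?thesis .
  qed
  moreover have "card {q\<in>{1..n}. 1 \<in> apply_moment M l q} \<le> card (A \<union> snd ` S)"
    using sub fA fS by (intro card_mono) auto
  moreover have "card (A \<union> snd ` S) \<le> card A + card (snd ` S)" by (rule card_Un_le)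
  ultimately show ?thesis unfolding A_def by linarith
qed

lemma circ_count:
  assumes C: "is_circuit n C"
  shows "card {q\<in>{1..n}. 1 \<in> apply_circ (take m C) l0 q} \<le> 2 ^ m"
proof (induction m)
  case 0
  have "{q\<in>{1..n}. 1 \<in> apply_circ (take 0 C) l0 q} \<subseteq> {1}" by (auto simp: l0_def)
  hence "card {q\<in>{1..n}. 1 \<in> apply_circ (take 0 C) l0 q} \<le> card {1::nat}" by (intro card_mono) auto
  thus ?case by simp
next
  case (Suc m)
  show ?case
  proof (cases "m < length C")
    case True
    have "take (Suc m) C = take m C @ [C ! m]" using True by (simp add: take_Suc_conv_app_nth)
    hence e: "apply_circ (take (Suc m) C) l0 = apply_moment (C ! m) (apply_circ (take m C) l0)" by simp
    have "C ! m \<in> set C" using True by simp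
    hence "card {q\<in>{1..n}. 1 \<in> apply_circ (take (Suc m) C) l0 q} \<le> 2 * card {q\<in>{1..n}. 1 \<in> apply_circ (take m C) l0 q}"
      unfolding e by (rule moment_count[OF C])
    thus ?thesis using Suc by simp
  next
    case False
    hence "take (Suc m) C = take m C" by simp
    thus ?thesis using Suc by simp
  qed
qed

lemma geom_nat: "(\<Sum>m<L. (2::nat) ^ m) < 2 ^ L"
  by (induction L) auto

lemma gen_count:
  assumes C: "is_circuit n C"
  shows "card {X \<in> generated n C l0. 1 \<in> X} \<le> 2 ^ (length C + 1)"
proof -
  define A where "A m = {q\<in>{1..n}. 1 \<in> apply_circ (take m C) l0 q}" for m
  have sub: "{X \<in> generated n C l0. 1 \<in> X} \<subseteq> (\<Union>m\<in>{1..length C}. (\<lambda>q. apply_circ (take m C) l0 q) ` A m)"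
    unfolding generated_def A_def by auto
  have "card {X \<in> generated n C l0. 1 \<in> X} \<le> card (\<Union>m\<in>{1..length C}. (\<lambda>q. apply_circ (take m C) l0 q) ` A m)"
    using sub by (intro card_mono) (auto simp: A_def)
  also have "\<dots> \<le> (\<Sum>m\<in>{1..length C}. card ((\<lambda>q. apply_circ (take m C) l0 q) ` A m))"
    by (rule card_UN_le) simp
  also have "\<dots> \<le> (\<Sum>m\<in>{1..length C}. 2 ^ m)"
  proof (rule sum_mono)
    fix m
    have "card ((\<lambda>q. apply_circ (take m C) l0 q) ` A m) \<le> card (A m)" by (rule card_image_le) (simp add: A_def)
    also have "\<dots> \<le> 2 ^ m" unfolding A_def by (rule circ_count[OF C])
    finally show "card ((\<lambda>q. apply_circ (take m C) l0 q) ` A m) \<le> 2 ^ m" .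
  qed
  also have "\<dots> \<le> (\<Sum>m<length C + 1. 2 ^ m)" by (intro sum_mono2) auto
  also have "\<dots> \<le> 2 ^ (length C + 1)" using geom_nat[of "length C + 1"] by simp
  finally show ?thesis .
qed

lemma no_k2:
  fixes c2 :: real
  assumes k0: "k0 = 2" and G0: "\<forall>n \<ge> k0. clean_special k0 n (G0 n)"
    and D: "(\<lambda>n. real (depth (G0 n)) - c2 * real n ^ (k0 - 2)) \<in> O(\<lambda>n. real n powr (real k0 - 3))"
  shows False
proof -
  obtain c where c: "c > 0" "eventually (\<lambda>n. norm (real (depth (G0 n)) - c2 * real n ^ (k0 - 2)) \<le> c * norm (real n powr (real k0 - 3))) at_top"
    using D unfolding bigo_def by blast
  then obtain N where N: "\<forall>n\<ge>N. norm (real (depth (G0 n)) - c2 * real n ^ (k0 - 2)) \<le> c * norm (real n powr (real k0 - 3))"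
    unfolding eventually_at_top_linorder by blast
  define B where "B = nat \<lceil>c2 + c\<rceil>"
  define n where "n = max N (2 ^ (B + 1) + 2)"
  have n: "n \<ge> N" "n \<ge> 2 ^ (B + 1) + 2" unfolding n_def by auto
  hence n1: "real n \<ge> 1" by simp
  have "norm (real n powr (real k0 - 3)) \<le> 1"
  proof -
    have "real n powr (real k0 - 3) = real n powr (- 1)" using k0 by simp
    also have "\<dots> = 1 / real n" using n1 by (simp add: powr_minus divide_inverse)
    finally have "real n powr (real k0 - 3) = 1 / real n" .
    thus ?thesis using n1 by simp
  qed
  hence "norm (real (depth (G0 n)) - c2) \<le> c" using N n c(1) k0 mult_left_mono[of _ 1 c] by fastforce
  hence "real (depth (G0 n)) \<le> c2 + c" by simp
  hence dB: "length (G0 n) \<le> B" unfolding B_def depth_def by linarith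
  have cs: "clean_special 2 n (G0 n)" using G0 k0 n by simp
  have circ: "is_circuit n (G0 n)" using cs unfolding clean_special_def by blast
  have "(\<lambda>i. insert 1 {i}) ` {2..n} \<subseteq> {X \<in> generated n (G0 n) l0. 1 \<in> X}"
  proof
    fix X assume "X \<in> (\<lambda>i. insert 1 {i}) ` {2..n}"
    then obtain i where i: "i \<in> {2..n}" "X = insert 1 {i}" by blast
    have "{i} \<subseteq> {2..n} \<and> card {i} = 2 - 1" using i by simp
    hence "insert 1 {i} \<in> generated n (G0 n) l0" using cs unfolding clean_special_def by blast
    thus "X \<in> {X \<in> generated n (G0 n) l0. 1 \<in> X}" using i by simp
  qed
  hence "card ((\<lambda>i. insert 1 {i}) ` {2..n}) \<le> card {X \<in> generated n (G0 n) l0. 1 \<in> X}"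
  proof (rule card_mono[rotated])
    have "finite (generated n (G0 n) l0)"
    proof -
      have "generated n (G0 n) l0 \<subseteq> (\<lambda>(m, q). apply_circ (take m (G0 n)) l0 q) ` ({1..length (G0 n)} \<times> {1..n})"
        unfolding generated_def by force
      thus ?thesis by (rule finite_subset) simp
    qed
    thus "finite {X \<in> generated n (G0 n) l0. 1 \<in> X}" by simp
  qed
  moreover have "card ((\<lambda>i. insert 1 {i}) ` {2..n}) = n - 1"
  proof -
    have "inj_on (\<lambda>i. insert 1 {i}) {2..n}"
    proof (rule inj_onI)
      fix x y :: nat assume xy: "x \<in> {2..n}" "y \<in> {2..n}" "insert 1 {x} = insert 1 {y}"
      hence "x \<in> insert 1 {y}" by blast
      hence "x = 1 \<or> x = y" by simp
      thus "x = y" using xy(1) by auto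
    qed
    hence "card ((\<lambda>i. insert 1 {i}) ` {2..n}) = card {2..n}" by (rule card_image)
    thus ?thesis by simp
  qed
  moreover have "card {X \<in> generated n (G0 n) l0. 1 \<in> X} \<le> 2 ^ (B + 1)"
  proof -
    have "card {X \<in> generated n (G0 n) l0. 1 \<in> X} \<le> 2 ^ (length (G0 n) + 1)" by (rule gen_count[OF circ])
    also have "\<dots> \<le> 2 ^ (B + 1)" using dB by (intro power_increasing) auto
    finally show ?thesis .
  qed
  ultimately show False using n(2) by linarith
qed


theorem mainTheorem5:
  shows "(\<forall>k (G :: nat \<Rightarrow> circuit). k \<ge> 2 \<and> (\<forall>m \<ge> k. clean_special k m (G m)) \<longrightarrow>
            (\<forall>n \<ge> k. k_body_gen k n (full_gen G k n)))
       \<and> (\<forall>k0 (G0 :: nat \<Rightarrow> circuit). k0 \<ge> 2 \<and> (\<forall>n \<ge> k0. clean_special k0 n (G0 n)) \<longrightarrow>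
            (\<forall>k > k0. \<forall>n \<ge> k.
                clean_special k n (special_gen G0 k0 (k - k0) n) \<and>
                k_body_gen k n (full_gen (special_gen G0 k0 (k - k0)) k n))
          \<and> (\<forall>c1 c2 :: real. c1 > 0 \<and> c2 > 0 \<and>
               (\<lambda>n. real (csize (G0 n)) - c1 * real n ^ (k0 - 1)) \<in> O(\<lambda>n. real n powr (real k0 - 2)) \<and>
               (\<lambda>n. real (depth (G0 n)) - c2 * real n ^ (k0 - 2)) \<in> O(\<lambda>n. real n powr (real k0 - 3))
             \<longrightarrow> (\<forall>k > k0.
               (\<lambda>n. real (csize (full_gen (special_gen G0 k0 (k - k0)) k n))
                     - c1 * (fact (k0 - 1) / fact k) * real n ^ k) \<in> O(\<lambda>n. real n powr (real k - 1)) \<and>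
               (\<lambda>n. real (depth (full_gen (special_gen G0 k0 (k - k0)) k n))
                     - c2 * (fact (k0 - 2) / fact (k - 1)) * real n ^ (k - 1)) \<in> O(\<lambda>n. real n powr (real k - 2)))))"
  proof (rule conjI)
  show "\<forall>k (G :: nat \<Rightarrow> circuit). k \<ge> 2 \<and> (\<forall>m \<ge> k. clean_special k m (G m)) \<longrightarrow>
            (\<forall>n \<ge> k. k_body_gen k n (full_gen G k n))"
    using part1 by blast
next
  show "\<forall>k0 (G0 :: nat \<Rightarrow> circuit). k0 \<ge> 2 \<and> (\<forall>n \<ge> k0. clean_special k0 n (G0 n)) \<longrightarrow>
            (\<forall>k > k0. \<forall>n \<ge> k.
                clean_special k n (special_gen G0 k0 (k - k0) n) \<and>
                k_body_gen k n (full_gen (special_gen G0 k0 (k - k0)) k n))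
          \<and> (\<forall>c1 c2 :: real. c1 > 0 \<and> c2 > 0 \<and>
               (\<lambda>n. real (csize (G0 n)) - c1 * real n ^ (k0 - 1)) \<in> O(\<lambda>n. real n powr (real k0 - 2)) \<and>
               (\<lambda>n. real (depth (G0 n)) - c2 * real n ^ (k0 - 2)) \<in> O(\<lambda>n. real n powr (real k0 - 3))
             \<longrightarrow> (\<forall>k > k0.
               (\<lambda>n. real (csize (full_gen (special_gen G0 k0 (k - k0)) k n))
                     - c1 * (fact (k0 - 1) / fact k) * real n ^ k) \<in> O(\<lambda>n. real n powr (real k - 1)) \<and>
               (\<lambda>n. real (depth (full_gen (special_gen G0 k0 (k - k0)) k n))
                     - c2 * (fact (k0 - 2) / fact (k - 1)) * real n ^ (k - 1)) \<in> O(\<lambda>n. real n powr (real k - 2))))"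
  proof (intro allI impI)
  fix k0 and G0 :: "nat \<Rightarrow> circuit"
  assume a: "2 \<le> k0 \<and> (\<forall>n\<ge>k0. clean_special k0 n (G0 n))"
  hence k0: "k0 \<ge> 2" and G0: "\<forall>n\<ge>k0. clean_special k0 n (G0 n)" by auto
  have "\<forall>k>k0. \<forall>n\<ge>k. clean_special k n (special_gen G0 k0 (k - k0) n) \<and>
                       k_body_gen k n (full_gen (special_gen G0 k0 (k - k0)) k n)"
  proof (intro allI impI conjI)
    fix k n assume k: "k0 < k" and n: "k \<le> n"
    have cl: "\<forall>m\<ge>k. clean_special k m (special_gen G0 k0 (k - k0) m)"
      using part2_clean[OF k0 G0, of "k - k0"] k by simp
    thus "clean_special k n (special_gen G0 k0 (k - k0) n)" using n by blast
    show "k_body_gen k n (full_gen (special_gen G0 k0 (k - k0)) k n)"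
      by (rule part1) (use k k0 cl n in auto)
  qed
  moreover have "\<forall>c1 c2. 0 < c1 \<and> 0 < c2 \<and>
        (\<lambda>n. real (csize (G0 n)) - c1 * real n ^ (k0 - 1)) \<in> O(\<lambda>n. real n powr (real k0 - 2)) \<and>
        (\<lambda>n. real (depth (G0 n)) - c2 * real n ^ (k0 - 2)) \<in> O(\<lambda>n. real n powr (real k0 - 3)) \<longrightarrow>
        (\<forall>k>k0. (\<lambda>n. real (csize (full_gen (special_gen G0 k0 (k - k0)) k n)) -
                     c1 * (fact (k0 - 1) / fact k) * real n ^ k) \<in> O(\<lambda>n. real n powr (real k - 1)) \<and>
                (\<lambda>n. real (depth (full_gen (special_gen G0 k0 (k - k0)) k n)) -
                     c2 * (fact (k0 - 2) / fact (k - 1)) * real n ^ (k - 1)) \<in> O(\<lambda>n. real n powr (real k - 2)))"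
  proof (intro allI impI conjI)
    fix c1 c2 :: real and k
    assume h: "0 < c1 \<and> 0 < c2 \<and>
        (\<lambda>n. real (csize (G0 n)) - c1 * real n ^ (k0 - 1)) \<in> O(\<lambda>n. real n powr (real k0 - 2)) \<and>
        (\<lambda>n. real (depth (G0 n)) - c2 * real n ^ (k0 - 2)) \<in> O(\<lambda>n. real n powr (real k0 - 3))"
      and k: "k0 < k"
    have Hs: "(\<lambda>n. real (csize (G0 n)) - c1 * real n ^ (k0 - 1)) \<in> O(\<lambda>n. real n powr (real k0 - 2))"
      and Hd: "(\<lambda>n. real (depth (G0 n)) - c2 * real n ^ (k0 - 2)) \<in> O(\<lambda>n. real n powr (real k0 - 3))"
      using h by auto
    have k03: "k0 \<ge> 3"
    proof (rule ccontr)
      assume "\<not> k0 \<ge> 3"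
      hence "k0 = 2" using k0 by simp
      thus False using no_k2[OF _ G0 Hd] by blast
    qed
    define F where "F = special_gen G0 k0 (k - k0)"
    have e1: "real k0 - 2 = real (k0 - 1 - 1)" using k0 by (simp add: of_nat_diff)
    have bs: "bnd (\<lambda>n. real (csize (G0 n)) - c1 * real n ^ (k0 - 1)) (k0 - 1 - 1)"
      using Hs unfolding e1 by (rule bigo_bnd)
    have as: "bnd (\<lambda>n. real (csize (F n)) - c1 * (fact (k0 - 1) / fact (k0 - 1 + (k - k0))) * real n ^ (k0 - 1 + (k - k0))) (k0 - 1 + (k - k0) - 1)"
      unfolding F_def by (rule asym_special[OF good_csize k0 _ bs]) (use k0 in simp)
    have ee1: "k0 - 1 + (k - k0) = k - 1" using k k0 by simp
    have as': "bnd (\<lambda>n. real (csize (F n)) - (c1 * (fact (k0 - 1) / fact (k - 1))) * real n ^ (k - 1)) (k - 1 - 1)"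
      using as unfolding ee1 .
    have fs: "bnd (\<lambda>n. real (csize (full_gen F k n)) - (c1 * (fact (k0 - 1) / fact (k - 1))) / real (k - 1 + 1) * real n ^ (k - 1 + 1)) (k - 1)"
      by (rule asym_full[OF good_csize _ _ as']) (use k k0 in simp_all)
    have ee2: "k - 1 + 1 = k" using k by simp
    have cc1: "(c1 * (fact (k0 - 1) / fact (k - 1))) / real k = c1 * (fact (k0 - 1) / fact k)"
    proof -
      have "fact k = real k * fact (k - 1)"
      proof -
        have "k = Suc (k - 1)" using k by simp
        hence "fact k = (fact (Suc (k - 1)) :: real)" by simp
        also have "\<dots> = real (Suc (k - 1)) * fact (k - 1)" by (rule fact_Suc)
        also have "Suc (k - 1) = k" using k by simp
        finally show ?thesis .
      qed
      moreover have "real k > 0" using k by simp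
      ultimately show ?thesis by (simp add: field_simps)
    qed
    have fs': "bnd (\<lambda>n. real (csize (full_gen F k n)) - c1 * (fact (k0 - 1) / fact k) * real n ^ k) (k - 1)"
      using fs unfolding ee2 cc1 .
    have e3: "real k - 1 = real (k - 1)" using k by (simp add: of_nat_diff)
    show "(\<lambda>n. real (csize (full_gen (special_gen G0 k0 (k - k0)) k n)) -
                     c1 * (fact (k0 - 1) / fact k) * real n ^ k) \<in> O(\<lambda>n. real n powr (real k - 1))"
      unfolding e3 F_def[symmetric] by (rule bnd_bigo[OF fs'])
    have e4: "real k0 - 3 = real (k0 - 2 - 1)" using k03 by (simp add: of_nat_diff)
    have bd: "bnd (\<lambda>n. real (depth (G0 n)) - c2 * real n ^ (k0 - 2)) (k0 - 2 - 1)"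
      using Hd unfolding e4 by (rule bigo_bnd)
    have ad: "bnd (\<lambda>n. real (depth (F n)) - c2 * (fact (k0 - 2) / fact (k0 - 2 + (k - k0))) * real n ^ (k0 - 2 + (k - k0))) (k0 - 2 + (k - k0) - 1)"
      unfolding F_def by (rule asym_special[OF good_depth k0 _ bd]) (use k03 in simp)
    have ee3: "k0 - 2 + (k - k0) = k - 2" using k k03 by simp
    have ad': "bnd (\<lambda>n. real (depth (F n)) - (c2 * (fact (k0 - 2) / fact (k - 2))) * real n ^ (k - 2)) (k - 2 - 1)"
      using ad unfolding ee3 .
    have fd: "bnd (\<lambda>n. real (depth (full_gen F k n)) - (c2 * (fact (k0 - 2) / fact (k - 2))) / real (k - 2 + 1) * real n ^ (k - 2 + 1)) (k - 2)"
      by (rule asym_full[OF good_depth _ _ ad']) (use k k03 in simp_all)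
    have ee4: "k - 2 + 1 = k - 1" using k k03 by simp
    have cc2: "(c2 * (fact (k0 - 2) / fact (k - 2))) / real (k - 1) = c2 * (fact (k0 - 2) / fact (k - 1))"
    proof -
      have "fact (k - 1) = real (k - 1) * fact (k - 2)"
      proof -
        have "k - 1 = Suc (k - 2)" using k k03 by simp
        hence "fact (k - 1) = (fact (Suc (k - 2)) :: real)" by simp
        also have "\<dots> = real (Suc (k - 2)) * fact (k - 2)" by (rule fact_Suc)
        also have "Suc (k - 2) = k - 1" using k k03 by simp
        finally show ?thesis .
      qed
      moreover have "real (k - 1) > 0" using k k03 by simp
      ultimately show ?thesis by (simp add: field_simps)
    qed
    have fd': "bnd (\<lambda>n. real (depth (full_gen F k n)) - c2 * (fact (k0 - 2) / fact (k - 1)) * real n ^ (k - 1)) (k - 2)"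
      using fd unfolding ee4 cc2 .
    have e5: "real k - 2 = real (k - 2)" using k k03 by (simp add: of_nat_diff)
    show "(\<lambda>n. real (depth (full_gen (special_gen G0 k0 (k - k0)) k n)) -
                     c2 * (fact (k0 - 2) / fact (k - 1)) * real n ^ (k - 1)) \<in> O(\<lambda>n. real n powr (real k - 2))"
      unfolding e5 F_def[symmetric] by (rule bnd_bigo[OF fd'])
  qed
  ultimately show "(\<forall>k > k0. \<forall>n \<ge> k.
                clean_special k n (special_gen G0 k0 (k - k0) n) \<and>
                k_body_gen k n (full_gen (special_gen G0 k0 (k - k0)) k n))
          \<and> (\<forall>c1 c2 :: real. c1 > 0 \<and> c2 > 0 \<and>
               (\<lambda>n. real (csize (G0 n)) - c1 * real n ^ (k0 - 1)) \<in> O(\<lambda>n. real n powr (real k0 - 2)) \<and>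
               (\<lambda>n. real (depth (G0 n)) - c2 * real n ^ (k0 - 2)) \<in> O(\<lambda>n. real n powr (real k0 - 3))
             \<longrightarrow> (\<forall>k > k0.
               (\<lambda>n. real (csize (full_gen (special_gen G0 k0 (k - k0)) k n))
                     - c1 * (fact (k0 - 1) / fact k) * real n ^ k) \<in> O(\<lambda>n. real n powr (real k - 1)) \<and>
               (\<lambda>n. real (depth (full_gen (special_gen G0 k0 (k - k0)) k n))
                     - c2 * (fact (k0 - 2) / fact (k - 1)) * real n ^ (k - 1)) \<in> O(\<lambda>n. real n powr (real k - 2))))"
    by (rule conjI)
  qed
qed

end
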